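(* Let $\mathbb{K}=\mathbb{R}$ or $\mathbb{C}$, let $(V,W_\ast)$ be a finite-dimensional $\mathbb{K}$-vector space with an increasing filtration, and let $\phi:A_1^\ast\to A_2^\ast$ be a morphism of cohomologically connected DGAs over $\mathbb{K}$ inducing isomorphisms on $0$-th and first cohomology. Then the induced functors $F(\phi):F^{nil}(A_1^\ast,V,W_\ast)\to F^{nil}(A_2^\ast,V,W_\ast)$ and $F_{gr}(\phi):F^{nil}_{gr}(A_1^\ast,V,W_\ast)\to F^{nil}_{gr}(A_2^\ast,V,W_\ast)$ are fully faithful.
   Context: A DGA $A^\ast$ is cohomologically connected if $H^0(A^\ast)\cong\mathbb{K}$. $W_k(\mathrm{End}(V))$ denotes the endomorphisms $f$ with $f(W_i V)\subset W_{i+k}V$ for all $i$. The category $F^{nil}(A^\ast,V,W_\ast)$ has objects $\omega\in A^1\otimes W_{-1}(\mathrm{End}(V))$ with $d\omega+\frac12[\omega,\omega]=0$, and morphisms from $\omega_1$ to $\omega_2$ the elements $a\in A^0\otimes W_0(\mathrm{End}(V))$ with $da+\omega_1a-a\omega_2=0$. The category $F^{nil}_{gr}(A^\ast,V,W_\ast)$ has the same objects, and morphisms from $\omega_1$ to $\omega_2$ the elements $a\in\mathrm{Id}_V+A^0\otimes W_{-1}(\mathrm{End}(V))$ with $da+\omega_1a-a\omega_2=0$. The functors $F(\phi),F_{gr}(\phi)$ apply $\phi\otimes\mathrm{id}$ to objects and morphisms. *)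

theory Defs
  imports "HOL-Analysis.Analysis"
begin

text \<open>A unital K-algebra is a ring 'a together with a ring homomorphism
  iota : K -> 'a with central image (scalar multiplication c.x = iota c * x).
  A DGA A^* is given by its graded pieces A i (i = 0,1,2,...) inside the ambient
  ring 'a, which is required to be the direct sum of the A i, and the
  differential d.\<close>

definition dga :: "('k::field \<Rightarrow> 'a::ring_1) \<Rightarrow> (nat \<Rightarrow> 'a set) \<Rightarrow> ('a \<Rightarrow> 'a) \<Rightarrow> bool" where
  "dga \<iota> A d \<longleftrightarrow>
     (\<forall>x y. \<iota> (x + y) = \<iota> x + \<iota> y) \<and> (\<forall>x y. \<iota> (x * y) = \<iota> x * \<iota> y) \<and> \<iota> 1 = 1 \<and>
     (\<forall>c x. \<iota> c * x = x * \<iota> c) \<and>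
     (\<forall>i. 0 \<in> A i \<and> (\<forall>x\<in>A i. \<forall>y\<in>A i. x + y \<in> A i) \<and> (\<forall>c. \<forall>x\<in>A i. \<iota> c * x \<in> A i)) \<and>
     (\<forall>i j. \<forall>x\<in>A i. \<forall>y\<in>A j. x * y \<in> A (i + j)) \<and>
     1 \<in> A 0 \<and>
     (\<forall>x. \<exists>f N. (\<forall>i. f i \<in> A i) \<and> x = (\<Sum>i<N. f i)) \<and>
     (\<forall>f N. (\<forall>i. f i \<in> A i) \<and> (\<Sum>i<N. f i) = 0 \<longrightarrow> (\<forall>i<N. f i = 0)) \<and>
     (\<forall>x y. d (x + y) = d x + d y) \<and> (\<forall>c x. d (\<iota> c * x) = \<iota> c * d x) \<and>
     (\<forall>i. \<forall>x\<in>A i. d x \<in> A (Suc i)) \<and>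
     (\<forall>x. d (d x) = 0) \<and>
     (\<forall>i. \<forall>x\<in>A i. \<forall>y. d (x * y) = d x * y + (-1) ^ i * x * d y) \<and>
     (\<forall>i j. \<forall>x\<in>A i. \<forall>y\<in>A j. x * y = (-1) ^ (i * j) * (y * x))"

definition dga_hom ::
  "('k::field \<Rightarrow> 'a::ring_1) \<Rightarrow> (nat \<Rightarrow> 'a set) \<Rightarrow> ('a \<Rightarrow> 'a) \<Rightarrow>
   ('k \<Rightarrow> 'b::ring_1) \<Rightarrow> (nat \<Rightarrow> 'b set) \<Rightarrow> ('b \<Rightarrow> 'b) \<Rightarrow> ('a \<Rightarrow> 'b) \<Rightarrow> bool" where
  "dga_hom \<iota>1 A1 d1 \<iota>2 A2 d2 \<phi> \<longleftrightarrow>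
     (\<forall>x y. \<phi> (x + y) = \<phi> x + \<phi> y) \<and> (\<forall>x y. \<phi> (x * y) = \<phi> x * \<phi> y) \<and> \<phi> 1 = 1 \<and>
     (\<forall>c. \<phi> (\<iota>1 c) = \<iota>2 c) \<and>
     (\<forall>i. \<phi> ` A1 i \<subseteq> A2 i) \<and>
     (\<forall>x. \<phi> (d1 x) = d2 (\<phi> x))"

definition cocycles :: "(nat \<Rightarrow> 'a::ring_1 set) \<Rightarrow> ('a \<Rightarrow> 'a) \<Rightarrow> nat \<Rightarrow> 'a set" where
  "cocycles A d i = {x \<in> A i. d x = 0}"

fun coboundaries :: "(nat \<Rightarrow> 'a::ring_1 set) \<Rightarrow> ('a \<Rightarrow> 'a) \<Rightarrow> nat \<Rightarrow> 'a set" where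
  "coboundaries A d 0 = {0}"
| "coboundaries A d (Suc i) = d ` A i"

text \<open>H^0(A) = Z^0(A) is isomorphic to K as a K-vector space.\<close>
definition cohom_connected :: "('k::field \<Rightarrow> 'a::ring_1) \<Rightarrow> (nat \<Rightarrow> 'a set) \<Rightarrow> ('a \<Rightarrow> 'a) \<Rightarrow> bool" where
  "cohom_connected \<iota> A d \<longleftrightarrow>
     (\<exists>f. bij_betw f (UNIV :: 'k set) (cocycles A d 0) \<and>
          (\<forall>x y. f (x + y) = f x + f y) \<and> (\<forall>c x. f (c * x) = \<iota> c * f x))"

definition induces_cohom_iso ::
  "(nat \<Rightarrow> 'a::ring_1 set) \<Rightarrow> ('a \<Rightarrow> 'a) \<Rightarrow> (nat \<Rightarrow> 'b::ring_1 set) \<Rightarrow> ('b \<Rightarrow> 'b) \<Rightarrow>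
   ('a \<Rightarrow> 'b) \<Rightarrow> nat \<Rightarrow> bool" where
  "induces_cohom_iso A1 d1 A2 d2 \<phi> i \<longleftrightarrow>
     (\<forall>x\<in>cocycles A1 d1 i. \<phi> x \<in> coboundaries A2 d2 i \<longrightarrow> x \<in> coboundaries A1 d1 i) \<and>
     (\<forall>y\<in>cocycles A2 d2 i. \<exists>x\<in>cocycles A1 d1 i. \<phi> x - y \<in> coboundaries A2 d2 i)"

definition is_subspace :: "('n \<Rightarrow> 'k::field) set \<Rightarrow> bool" where
  "is_subspace S \<longleftrightarrow> (\<lambda>_. 0) \<in> S \<and> (\<forall>u\<in>S. \<forall>v\<in>S. (\<lambda>p. u p + v p) \<in> S) \<and>
     (\<forall>c. \<forall>v\<in>S. (\<lambda>p. c * v p) \<in> S)"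

definition incr_filtration :: "(int \<Rightarrow> ('n \<Rightarrow> 'k::field) set) \<Rightarrow> bool" where
  "incr_filtration W \<longleftrightarrow> (\<forall>i. is_subspace (W i)) \<and> (\<forall>i. W i \<subseteq> W (i + 1)) \<and>
     (\<exists>a b. W a = {\<lambda>_. 0} \<and> W b = UNIV)"

definition endo_apply :: "('n::finite \<Rightarrow> 'n \<Rightarrow> 'k::field) \<Rightarrow> ('n \<Rightarrow> 'k) \<Rightarrow> ('n \<Rightarrow> 'k)" where
  "endo_apply E v = (\<lambda>p. \<Sum>q\<in>UNIV. E p q * v q)"

definition W_End :: "(int \<Rightarrow> ('n::finite \<Rightarrow> 'k::field) set) \<Rightarrow> int \<Rightarrow> ('n \<Rightarrow> 'n \<Rightarrow> 'k) set" where
  "W_End W k = {E. \<forall>i. \<forall>v\<in>W i. endo_apply E v \<in> W (i + k)}"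

text \<open>S \<otimes> T inside A \<otimes> End(V): finite sums of elementary tensors a \<otimes> E.\<close>
definition tensor :: "('k::field \<Rightarrow> 'a::ring_1) \<Rightarrow> 'a set \<Rightarrow> ('n \<Rightarrow> 'n \<Rightarrow> 'k) set \<Rightarrow> ('n \<Rightarrow> 'n \<Rightarrow> 'a) set" where
  "tensor \<iota> S T = {M. \<exists>xs. (\<forall>(a, E)\<in>set xs. a \<in> S \<and> E \<in> T) \<and>
       M = (\<lambda>p q. sum_list (map (\<lambda>(a, E). a * \<iota> (E p q)) xs))}"

definition mat_mult :: "('n::finite \<Rightarrow> 'n \<Rightarrow> 'a::ring_1) \<Rightarrow> ('n \<Rightarrow> 'n \<Rightarrow> 'a) \<Rightarrow> ('n \<Rightarrow> 'n \<Rightarrow> 'a)" where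
  "mat_mult M N = (\<lambda>p q. \<Sum>r\<in>UNIV. M p r * N r q)"

definition mat_bracket :: "nat \<Rightarrow> nat \<Rightarrow> ('n::finite \<Rightarrow> 'n \<Rightarrow> 'a::ring_1) \<Rightarrow> ('n \<Rightarrow> 'n \<Rightarrow> 'a) \<Rightarrow> ('n \<Rightarrow> 'n \<Rightarrow> 'a)" where
  "mat_bracket i j M N = (\<lambda>p q. mat_mult M N p q - (-1) ^ (i * j) * mat_mult N M p q)"

definition mat_map :: "('a \<Rightarrow> 'b) \<Rightarrow> ('n \<Rightarrow> 'n \<Rightarrow> 'a) \<Rightarrow> ('n \<Rightarrow> 'n \<Rightarrow> 'b)" where
  "mat_map f M = (\<lambda>p q. f (M p q))"

definition Fnil_obj :: "('k::field \<Rightarrow> 'a::ring_1) \<Rightarrow> (nat \<Rightarrow> 'a set) \<Rightarrow> ('a \<Rightarrow> 'a) \<Rightarrow>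
    (int \<Rightarrow> ('n::finite \<Rightarrow> 'k) set) \<Rightarrow> ('n \<Rightarrow> 'n \<Rightarrow> 'a) \<Rightarrow> bool" where
  "Fnil_obj \<iota> A d W \<omega> \<longleftrightarrow> \<omega> \<in> tensor \<iota> (A 1) (W_End W (-1)) \<and>
     (\<forall>p q. d (\<omega> p q) + \<iota> (1/2) * mat_bracket 1 1 \<omega> \<omega> p q = 0)"

definition Fnil_hom :: "('k::field \<Rightarrow> 'a::ring_1) \<Rightarrow> (nat \<Rightarrow> 'a set) \<Rightarrow> ('a \<Rightarrow> 'a) \<Rightarrow>
    (int \<Rightarrow> ('n::finite \<Rightarrow> 'k) set) \<Rightarrow> ('n \<Rightarrow> 'n \<Rightarrow> 'a) \<Rightarrow> ('n \<Rightarrow> 'n \<Rightarrow> 'a) \<Rightarrow> ('n \<Rightarrow> 'n \<Rightarrow> 'a) set" where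
  "Fnil_hom \<iota> A d W \<omega>1 \<omega>2 = {a. a \<in> tensor \<iota> (A 0) (W_End W 0) \<and>
     (\<forall>p q. d (a p q) + mat_mult \<omega>1 a p q - mat_mult a \<omega>2 p q = 0)}"

definition Fnil_gr_hom :: "('k::field \<Rightarrow> 'a::ring_1) \<Rightarrow> (nat \<Rightarrow> 'a set) \<Rightarrow> ('a \<Rightarrow> 'a) \<Rightarrow>
    (int \<Rightarrow> ('n::finite \<Rightarrow> 'k) set) \<Rightarrow> ('n \<Rightarrow> 'n \<Rightarrow> 'a) \<Rightarrow> ('n \<Rightarrow> 'n \<Rightarrow> 'a) \<Rightarrow> ('n \<Rightarrow> 'n \<Rightarrow> 'a) set" where
  "Fnil_gr_hom \<iota> A d W \<omega>1 \<omega>2 =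
     {a. (\<lambda>p q. a p q - (if p = q then 1 else 0)) \<in> tensor \<iota> (A 0) (W_End W (-1)) \<and>
     (\<forall>p q. d (a p q) + mat_mult \<omega>1 a p q - mat_mult a \<omega>2 p q = 0)}"

end

theory Submission
  imports Defs "HOL-Library.Function_Algebras"
begin

lemma fun_sum_apply: "(sum f A) x = (\<Sum>a\<in>A. f a x)"
  by (induction A rule: infinite_finite_induct) auto

definition msc :: "'k::field \<Rightarrow> ('n \<Rightarrow> 'n \<Rightarrow> 'k) \<Rightarrow> ('n \<Rightarrow> 'n \<Rightarrow> 'k)" where
  "msc c M = (\<lambda>p q. c * M p q)"

lemma msc_apply[simp]: "msc c M p q = c * M p q" by (simp add: msc_def)

interpretation MS: vector_space "msc :: 'k::field \<Rightarrow> ('n \<Rightarrow> 'n \<Rightarrow> 'k) \<Rightarrow> _"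
  by standard (auto simp: fun_eq_iff algebra_simps)

definition emat :: "'n \<Rightarrow> 'n \<Rightarrow> 'n \<Rightarrow> 'n \<Rightarrow> 'k::field" where
  "emat p q = (\<lambda>i j. if i = p \<and> j = q then 1 else 0)"

lemma mat_expand:
  fixes M :: "'n::finite \<Rightarrow> 'n \<Rightarrow> 'k::field"
  shows "M = (\<Sum>pq\<in>UNIV. msc (M (fst pq) (snd pq)) (emat (fst pq) (snd pq)))"
proof (rule ext, rule ext)
  fix i j
  have "(\<Sum>pq\<in>UNIV. msc (M (fst pq) (snd pq)) (emat (fst pq) (snd pq))) i j
      = (\<Sum>pq\<in>UNIV. (if pq = (i,j) then M i j else 0))"
    unfolding fun_sum_apply by (rule sum.cong) (auto simp: emat_def)
  also have "\<dots> = M i j" by simp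
  finally show "M i j = (\<Sum>pq\<in>UNIV. msc (M (fst pq) (snd pq)) (emat (fst pq) (snd pq))) i j" by simp
qed

lemma span_emat: "(UNIV :: ('n::finite \<Rightarrow> 'n \<Rightarrow> 'k::field) set) \<subseteq> MS.span (range (\<lambda>pq. emat (fst pq) (snd pq)))"
proof
  fix M :: "'n \<Rightarrow> 'n \<Rightarrow> 'k"
  show "M \<in> MS.span (range (\<lambda>pq. emat (fst pq) (snd pq)))"
    by (subst mat_expand) (intro MS.span_sum MS.span_scale MS.span_base, auto)
qed

lemma lin_sum:
  fixes L :: "'b::comm_monoid_add \<Rightarrow> 'c::ab_group_add"
  assumes "\<And>E F. L (E + F) = L E + L F"
  shows "L (sum f A) = (\<Sum>a\<in>A. L (f a))"
proof (induction A rule: infinite_finite_induct)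
  case (infinite A)
  have "L 0 = L 0 + L 0" using assms[of 0 0] by simp
  then show ?case using infinite by (metis add_cancel_right_right sum.infinite)
next
  case empty
  have "L 0 = L 0 + L 0" using assms[of 0 0] by simp
  then show ?case by (metis add_cancel_right_right sum.empty)
qed (simp add: assms)

lemma lin_repr:
  fixes L :: "('n::finite \<Rightarrow> 'n \<Rightarrow> 'k::field) \<Rightarrow> 'k"
  assumes "\<And>E F. L (E + F) = L E + L F" "\<And>c E. L (msc c E) = c * L E"
  shows "L E = (\<Sum>pq\<in>UNIV. E (fst pq) (snd pq) * L (emat (fst pq) (snd pq)))"
proof -
  have "L E = L (\<Sum>pq\<in>UNIV. msc (E (fst pq) (snd pq)) (emat (fst pq) (snd pq)))"
    using mat_expand[of E] by (rule arg_cong)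
  also have "\<dots> = (\<Sum>pq\<in>UNIV. L (msc (E (fst pq) (snd pq)) (emat (fst pq) (snd pq))))"
    by (rule lin_sum[of L, OF assms(1)])
  also have "\<dots> = (\<Sum>pq\<in>UNIV. E (fst pq) (snd pq) * L (emat (fst pq) (snd pq)))"
    by (rule sum.cong) (auto simp: assms(2))
  finally show ?thesis .
qed

lemma bases:
  fixes T T' :: "('n::finite \<Rightarrow> 'n \<Rightarrow> 'k::field) set"
  assumes sub: "MS.subspace T'" and TT: "T' \<subseteq> T"
  obtains B' B Bf where "B' \<subseteq> T'" "MS.independent B'" "T' \<subseteq> MS.span B'"
    "B' \<subseteq> B" "B \<subseteq> T" "MS.independent B" "T \<subseteq> MS.span B"
    "B \<subseteq> Bf" "MS.independent Bf" "UNIV \<subseteq> MS.span Bf" "finite Bf"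
proof -
  obtain B' where B': "B' \<subseteq> T'" "MS.independent B'" "T' \<subseteq> MS.span B'"
  proof (rule MS.maximal_independent_subset_extend[OF empty_subsetI MS.independent_empty])
    fix X assume a: "{} \<subseteq> X" "X \<subseteq> T'" "MS.independent X" "T' \<subseteq> MS.span X"
    show thesis by (rule that[OF a(2) a(3) a(4)])
  qed
  have "B' \<subseteq> T" using B'(1) TT by (rule order_trans)
  obtain B where B: "B' \<subseteq> B" "B \<subseteq> T" "MS.independent B" "T \<subseteq> MS.span B"
    by (rule MS.maximal_independent_subset_extend[OF \<open>B' \<subseteq> T\<close> B'(2)])
  obtain Bf where Bf: "B \<subseteq> Bf" "MS.independent Bf" "UNIV \<subseteq> MS.span Bf"
  proof (rule MS.maximal_independent_subset_extend[OF subset_UNIV B(3)])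
    fix X assume a: "B \<subseteq> X" "X \<subseteq> UNIV" "MS.independent X" "UNIV \<subseteq> MS.span X"
    show thesis by (rule that[OF a(1) a(3) a(4)])
  qed
  have fr: "finite (range (\<lambda>pq. emat (fst pq) (snd pq) :: 'n \<Rightarrow> 'n \<Rightarrow> 'k))"
    by (rule finite_imageI) (rule finite_class.finite_UNIV)
  have "Bf \<subseteq> MS.span (range (\<lambda>pq. emat (fst pq) (snd pq)))" by (rule order_trans[OF subset_UNIV span_emat])
  from MS.independent_span_bound[OF fr Bf(2) this] have fBf: "finite Bf" by simp
  show ?thesis by (rule that[OF B' B Bf fBf])
qed

lemma LA:
  fixes T T' :: "('n::finite \<Rightarrow> 'n \<Rightarrow> 'k::field) set"
  assumes sub: "MS.subspace T'" and TT: "T' \<subseteq> T"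
  shows "\<exists>U L. finite U \<and> U \<subseteq> T \<and> (\<forall>u\<in>U. \<forall>E\<in>T'. L u E = 0) \<and>
     (\<forall>u E F. L u (E + F) = L u E + L u F) \<and> (\<forall>u c E. L u (msc c E) = c * L u E) \<and>
     (\<forall>E\<in>T. E - (\<Sum>u\<in>U. msc (L u E) u) \<in> T')"
proof -
  obtain B' B Bf where B': "B' \<subseteq> T'" "MS.independent B'" "T' \<subseteq> MS.span B'"
    and B: "B' \<subseteq> B" "B \<subseteq> T" "MS.independent B" "T \<subseteq> MS.span B"
    and Bf: "B \<subseteq> Bf" "MS.independent Bf" "UNIV \<subseteq> MS.span Bf" and fBf: "finite Bf"
    by (rule bases[OF sub TT])
  define L where "L u E = MS.representation Bf E u" for u E
  have finB: "finite B" "finite B'"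
    using finite_subset[OF Bf(1) fBf] finite_subset[OF B(1) finite_subset[OF Bf(1) fBf]] by auto
  have B'Bf: "B' \<subseteq> Bf" using B(1) Bf(1) by (rule order_trans)
  have spBf: "X \<in> MS.span Bf" for X using Bf(3) by (rule subsetD) (rule UNIV_I)
  have van: "L u E = 0" if u: "u \<in> B - B'" and E: "E \<in> T'" for u E
  proof -
    have sB': "E \<in> MS.span B'" using B'(3) E by (rule subsetD)
    have "MS.representation Bf E = MS.representation B' E"
      by (rule MS.representation_extend[OF Bf(2) sB' B'Bf])
    moreover have "MS.representation B' E u = 0"
      using MS.representation_ne_zero[of B' E u] u by blast
    ultimately show ?thesis by (simp add: L_def)
  qed
  have ladd: "L u (E + F) = L u E + L u F" for u E F
    unfolding L_def by (simp add: MS.representation_add[OF Bf(2) spBf spBf])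
  have lsc: "L u (msc c E) = c * L u E" for u c E
    unfolding L_def by (simp add: MS.representation_scale[OF Bf(2) spBf])
  have dec: "E - (\<Sum>u\<in>B - B'. msc (L u E) u) \<in> T'" if E: "E \<in> T" for E
  proof -
    have sB: "E \<in> MS.span B" using B(4) E by (rule subsetD)
    have ER: "MS.representation Bf E = MS.representation B E"
      by (rule MS.representation_extend[OF Bf(2) sB Bf(1)])
    have "E = (\<Sum>b\<in>Bf. msc (MS.representation Bf E b) b)"
      by (rule MS.sum_representation_eq[OF Bf(2) spBf fBf order_refl, symmetric])
    also have "\<dots> = (\<Sum>b\<in>B. msc (MS.representation Bf E b) b)"
    proof (rule sum.mono_neutral_right[OF fBf Bf(1)])
      show "\<forall>i\<in>Bf - B. msc (MS.representation Bf E i) i = 0"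
      proof
        fix i assume "i \<in> Bf - B"
        then have "MS.representation B E i = 0" using MS.representation_ne_zero[of B E i] by blast
        then show "msc (MS.representation Bf E i) i = 0" by (simp add: ER)
      qed
    qed
    also have "\<dots> = (\<Sum>b\<in>B - B'. msc (L b E) b) + (\<Sum>b\<in>B'. msc (L b E) b)"
      unfolding L_def by (rule sum.subset_diff[OF B(1) finB(1)])
    finally have "E - (\<Sum>b\<in>B - B'. msc (L b E) b) = (\<Sum>b\<in>B'. msc (L b E) b)"
      by (simp add: algebra_simps)
    also have "\<dots> \<in> T'"
    proof (rule MS.subspace_sum[OF sub])
      fix b assume "b \<in> B'"
      then have "b \<in> T'" by (rule subsetD[OF B'(1)])
      then show "msc (L b E) b \<in> T'" by (rule MS.subspace_scale[OF sub])
    qed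
    finally show ?thesis .
  qed
  have fin: "finite (B - B')" using finB(1) by (rule finite_Diff)
  have subT: "B - B' \<subseteq> T" using B(2) by blast
  show ?thesis
    apply (rule exI[of _ "B - B'"], rule exI[of _ L])
    apply (intro conjI ballI allI)
         apply (rule fin)
        apply (rule subT)
       apply (rule van, assumption, assumption)
      apply (rule ladd)
     apply (rule lsc)
    apply (rule dec, assumption)
    done
qed

definition smat :: "('k \<Rightarrow> 'a::ring_1) \<Rightarrow> 'a \<Rightarrow> ('n \<Rightarrow> 'n \<Rightarrow> 'k) \<Rightarrow> ('n \<Rightarrow> 'n \<Rightarrow> 'a)" where
  "smat \<iota> x E = (\<lambda>p q. x * \<iota> (E p q))"

lemma smat_apply[simp]: "smat \<iota> x E p q = x * \<iota> (E p q)" by (simp add: smat_def)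

lemma smat_add_left: "smat \<iota> (x + y) E = smat \<iota> x E + smat \<iota> y E"
  by (simp add: fun_eq_iff algebra_simps)

lemma smat_zero_left[simp]: "smat \<iota> 0 E = 0"
  by (simp add: fun_eq_iff)

definition ksub :: "('k::field \<Rightarrow> 'a::ring_1) \<Rightarrow> 'a set \<Rightarrow> bool" where
  "ksub \<iota> S \<longleftrightarrow> 0 \<in> S \<and> (\<forall>x\<in>S. \<forall>y\<in>S. x + y \<in> S) \<and> (\<forall>c. \<forall>x\<in>S. \<iota> c * x \<in> S)"

definition linL :: "(('n \<Rightarrow> 'n \<Rightarrow> 'k::field) \<Rightarrow> 'k) \<Rightarrow> bool" where
  "linL L \<longleftrightarrow> (\<forall>E F. L (E + F) = L E + L F) \<and> (\<forall>c E. L (msc c E) = c * L E)"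

definition Lam :: "('k \<Rightarrow> 'a::ring_1) \<Rightarrow> (('n::finite \<Rightarrow> 'n \<Rightarrow> 'k::field) \<Rightarrow> 'k) \<Rightarrow> ('n \<Rightarrow> 'n \<Rightarrow> 'a) \<Rightarrow> 'a" where
  "Lam \<iota> L M = (\<Sum>pq\<in>UNIV. \<iota> (L (emat (fst pq) (snd pq))) * M (fst pq) (snd pq))"

lemma Lam_add: "Lam \<iota> L (M + N) = Lam \<iota> L M + Lam \<iota> L N"
  by (simp add: Lam_def distrib_left sum.distrib)

lemma Lam_zero[simp]: "Lam \<iota> L 0 = 0"
  by (simp add: Lam_def)

lemma Lam_neg: "Lam \<iota> L (- M) = - Lam \<iota> L M"
  by (simp add: Lam_def sum_negf)

lemma Lam_diff: "Lam \<iota> L (M - N) = Lam \<iota> L M - Lam \<iota> L N"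
  by (simp add: Lam_def right_diff_distrib sum_subtractf)

lemma Lam_sum: "Lam \<iota> L (sum f I) = (\<Sum>i\<in>I. Lam \<iota> L (f i))"
  by (induction I rule: infinite_finite_induct) (simp_all only: sum.infinite sum.empty sum.insert Lam_add Lam_zero not_False_eq_True)

lemma mm_add_left: "mat_mult (M + N) P = mat_mult M P + mat_mult N P"
  by (simp add: mat_mult_def fun_eq_iff distrib_right sum.distrib)
lemma mm_add_right: "mat_mult P (M + N) = mat_mult P M + mat_mult P N"
  by (simp add: mat_mult_def fun_eq_iff distrib_left sum.distrib)
lemma mm_zero_left[simp]: "mat_mult 0 P = 0"
  by (simp add: mat_mult_def fun_eq_iff)
lemma mm_zero_right[simp]: "mat_mult P 0 = 0"
  by (simp add: mat_mult_def fun_eq_iff)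
lemma mm_neg_left: "mat_mult (- M) P = - mat_mult M P"
  by (simp add: mat_mult_def fun_eq_iff sum_negf)
lemma mm_neg_right: "mat_mult P (- M) = - mat_mult P M"
  by (simp add: mat_mult_def fun_eq_iff sum_negf)
lemma mm_diff_left: "mat_mult (M - N) P = mat_mult M P - mat_mult N P"
  by (simp add: mat_mult_def fun_eq_iff left_diff_distrib sum_subtractf)
lemma mm_diff_right: "mat_mult P (M - N) = mat_mult P M - mat_mult P N"
  by (simp add: mat_mult_def fun_eq_iff right_diff_distrib sum_subtractf)
lemma mm_assoc: "mat_mult (mat_mult M N) P = mat_mult M (mat_mult N P)"
  unfolding mat_mult_def fun_eq_iff
  apply (intro allI)
  apply (simp only: sum_distrib_left sum_distrib_right mult.assoc)
  apply (rule sum.swap)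
  done

lemmas mm_simps = mm_add_left mm_add_right mm_neg_left mm_neg_right mm_diff_left mm_diff_right mm_assoc

locale ih =
  fixes \<iota> :: "'k::field \<Rightarrow> 'a::ring_1"
  assumes i_add: "\<And>x y. \<iota> (x + y) = \<iota> x + \<iota> y"
    and i_mult: "\<And>x y. \<iota> (x * y) = \<iota> x * \<iota> y"
    and i_one: "\<iota> 1 = 1"
    and i_central: "\<And>c x. \<iota> c * x = x * \<iota> c"
begin

lemma i_zero[simp]: "\<iota> 0 = 0"
  using i_add[of 0 0] by simp

lemma i_minus: "\<iota> (- x) = - \<iota> x"
proof -
  have "\<iota> x + \<iota> (- x) = 0" using i_add[of x "- x"] by simp
  then show ?thesis by (rule minus_unique[symmetric])
qed

lemma i_diff: "\<iota> (x - y) = \<iota> x - \<iota> y"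
  by (metis diff_conv_add_uminus i_add i_minus)

lemma i_sum: "\<iota> (sum f A) = (\<Sum>a\<in>A. \<iota> (f a))"
  by (induction A rule: infinite_finite_induct) (auto simp: i_add)

lemma smat_diff_right: "smat \<iota> x (E - F) = smat \<iota> x E - smat \<iota> x F"
  by (simp add: fun_eq_iff i_diff algebra_simps)

lemma smat_zero_right[simp]: "smat \<iota> x 0 = 0"
  by (simp add: fun_eq_iff)

lemma smat_sum_msc: "smat \<iota> x (\<Sum>u\<in>U. msc (c u) u) = (\<Sum>u\<in>U. smat \<iota> (x * \<iota> (c u)) u)"
  by (simp add: fun_eq_iff fun_sum_apply i_sum i_mult sum_distrib_left mult.assoc)

lemma tensor_induct[consumes 1, case_names zero step]:
  assumes "M \<in> tensor \<iota> S T" "P 0"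
    "\<And>x E M. x \<in> S \<Longrightarrow> E \<in> T \<Longrightarrow> P M \<Longrightarrow> P (smat \<iota> x E + M)"
  shows "P M"
proof -
  obtain xs where xs: "\<forall>(a, E)\<in>set xs. a \<in> S \<and> E \<in> T"
    "M = (\<lambda>p q. sum_list (map (\<lambda>(a, E). a * \<iota> (E p q)) xs))"
    using assms(1) unfolding tensor_def by blast
  have "P (\<lambda>p q. sum_list (map (\<lambda>(a, E). a * \<iota> (E p q)) xs))" using xs(1)
  proof (induction xs)
    case Nil
    from assms(2) show ?case by (simp add: zero_fun_def)
  next
    case (Cons y ys)
    obtain a E where y: "y = (a, E)" by (cases y)
    have "(\<lambda>p q. sum_list (map (\<lambda>(a, E). a * \<iota> (E p q)) (y # ys))) =
        smat \<iota> a E + (\<lambda>p q. sum_list (map (\<lambda>(a, E). a * \<iota> (E p q)) ys))"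
      by (simp add: y fun_eq_iff)
    then show ?case using Cons assms(3)[of a E] y by auto
  qed
  then show ?thesis using xs(2) by simp
qed

lemma tensor_zero[simp]: "0 \<in> tensor \<iota> S T"
  unfolding tensor_def by (rule CollectI, rule exI[of _ "[]"]) (auto simp: fun_eq_iff)

lemma tensor_smat: "x \<in> S \<Longrightarrow> E \<in> T \<Longrightarrow> smat \<iota> x E \<in> tensor \<iota> S T"
  unfolding tensor_def by (rule CollectI, rule exI[of _ "[(x, E)]"]) (auto simp: fun_eq_iff)

lemma tensor_add: "M \<in> tensor \<iota> S T \<Longrightarrow> N \<in> tensor \<iota> S T \<Longrightarrow> M + N \<in> tensor \<iota> S T"
proof -
  assume "M \<in> tensor \<iota> S T" "N \<in> tensor \<iota> S T"
  then obtain xs ys where xs: "\<forall>(a, E)\<in>set xs. a \<in> S \<and> E \<in> T"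
    "M = (\<lambda>p q. sum_list (map (\<lambda>(a, E). a * \<iota> (E p q)) xs))"
    and ys: "\<forall>(a, E)\<in>set ys. a \<in> S \<and> E \<in> T"
    "N = (\<lambda>p q. sum_list (map (\<lambda>(a, E). a * \<iota> (E p q)) ys))"
    unfolding tensor_def by blast
  show ?thesis unfolding tensor_def
    by (rule CollectI, rule exI[of _ "xs @ ys"]) (use xs ys in \<open>auto simp: fun_eq_iff\<close>)
qed

lemma tensor_mono:
  assumes M: "M \<in> tensor \<iota> S T" and SS: "S \<subseteq> S'" and TT: "T \<subseteq> T'"
  shows "M \<in> tensor \<iota> S' T'"
proof (rule tensor_induct[OF M, where P="\<lambda>M. M \<in> tensor \<iota> S' T'"])
  show "0 \<in> tensor \<iota> S' T'" by (rule tensor_zero)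
next
  fix x E N assume hx: "x \<in> S" and hE: "E \<in> T" and IH: "N \<in> tensor \<iota> S' T'"
  have "smat \<iota> x E \<in> tensor \<iota> S' T'"
    by (rule tensor_smat) (use hx hE SS TT in blast)+
  then show "smat \<iota> x E + N \<in> tensor \<iota> S' T'" by (rule tensor_add[OF _ IH])
qed

lemma tensor_sum: "(\<And>i. i \<in> I \<Longrightarrow> f i \<in> tensor \<iota> S T) \<Longrightarrow> sum f I \<in> tensor \<iota> S T"
proof (induction I rule: infinite_finite_induct)
  case (insert i I)
  then have "f i + sum f I \<in> tensor \<iota> S T" by (intro tensor_add) auto
  then show ?case using insert.hyps by (simp only: sum.insert not_False_eq_True)
qed (simp_all only: sum.infinite sum.empty tensor_zero not_False_eq_True)

lemma tensor_neg:
  assumes M: "M \<in> tensor \<iota> S T" and S: "\<And>x. x \<in> S \<Longrightarrow> - x \<in> S"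
  shows "- M \<in> tensor \<iota> S T"
proof (rule tensor_induct[OF M, where P="\<lambda>M. - M \<in> tensor \<iota> S T"])
  show "- 0 \<in> tensor \<iota> S T" by (simp only: minus_zero tensor_zero)
next
  fix x E N assume hx: "x \<in> S" and hE: "E \<in> T" and IH: "- N \<in> tensor \<iota> S T"
  have e: "- (smat \<iota> x E + N) = smat \<iota> (- x) E + (- N)" by (simp add: fun_eq_iff)
  have "smat \<iota> (- x) E \<in> tensor \<iota> S T"
    by (rule tensor_smat[OF S[OF hx] hE])
  then show "- (smat \<iota> x E + N) \<in> tensor \<iota> S T" unfolding e by (rule tensor_add[OF _ IH])
qed

lemma tensor_diff: "(\<And>x. x \<in> S \<Longrightarrow> - x \<in> S) \<Longrightarrow> M \<in> tensor \<iota> S T \<Longrightarrow> N \<in> tensor \<iota> S T \<Longrightarrow>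
    M - N \<in> tensor \<iota> S T"
  using tensor_add[of M S T "- N"] tensor_neg[of N S T] by (metis diff_conv_add_uminus)

lemma tensor_triv:
  fixes M :: "'n \<Rightarrow> 'n \<Rightarrow> 'a"
  assumes M: "M \<in> tensor \<iota> S T" and T: "T \<subseteq> {0}"
  shows "M = 0"
proof (rule tensor_induct[OF M, where P="\<lambda>M. M = 0"])
  show "(0::'n \<Rightarrow> 'n \<Rightarrow> 'a) = 0" by (rule refl)
next
  fix x E and N :: "'n \<Rightarrow> 'n \<Rightarrow> 'a" assume hx: "x \<in> S" and hE: "E \<in> T" and IH: "N = 0"
  have "E = 0" using T hE by blast
  then show "smat \<iota> x E + N = 0" by (simp only: smat_zero_right IH add_0)
qed

lemma tensor_entry:
  assumes M: "M \<in> tensor \<iota> S T" and S: "ksub \<iota> S"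
  shows "M p q \<in> S"
proof (rule tensor_induct[OF M, where P="\<lambda>M. M p q \<in> S"])
  show "0 p q \<in> S" using S by (simp add: ksub_def)
next
  fix x E N assume hx: "x \<in> S" and hE: "E \<in> T" and IH: "N p q \<in> S"
  have "x * \<iota> (E p q) = \<iota> (E p q) * x" by (rule i_central[symmetric])
  also have "\<dots> \<in> S" using S hx by (simp add: ksub_def)
  finally have "x * \<iota> (E p q) \<in> S" .
  then have "x * \<iota> (E p q) + N p q \<in> S" using S IH by (simp add: ksub_def)
  then show "(smat \<iota> x E + N) p q \<in> S" by simp
qed

lemma mm_smat: "mat_mult (smat \<iota> x E) (smat \<iota> y F) = smat \<iota> (x * y) (mat_mult E F)"
proof -
  have *: "(x * \<iota> a) * (y * \<iota> b) = x * y * (\<iota> a * \<iota> b)" for a b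
  proof -
    have c: "\<iota> a * y = y * \<iota> a" by (rule i_central)
    have "(x * \<iota> a) * (y * \<iota> b) = x * (\<iota> a * y) * \<iota> b" by (simp only: mult.assoc)
    also have "\<dots> = x * (y * \<iota> a) * \<iota> b" by (simp only: c)
    also have "\<dots> = x * y * (\<iota> a * \<iota> b)" by (simp only: mult.assoc)
    finally show ?thesis .
  qed
  show ?thesis
    by (simp add: fun_eq_iff mat_mult_def * i_sum i_mult sum_distrib_left)
qed

lemma tensor_mult:
  assumes M: "M \<in> tensor \<iota> S1 T1" and N: "N \<in> tensor \<iota> S2 T2"
    and S: "\<And>x y. x \<in> S1 \<Longrightarrow> y \<in> S2 \<Longrightarrow> x * y \<in> S3"
    and T: "\<And>E F. E \<in> T1 \<Longrightarrow> F \<in> T2 \<Longrightarrow> mat_mult E F \<in> T3"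
  shows "mat_mult M N \<in> tensor \<iota> S3 T3"
proof (rule tensor_induct[OF M, where P="\<lambda>M. mat_mult M N \<in> tensor \<iota> S3 T3"])
  show "mat_mult 0 N \<in> tensor \<iota> S3 T3" by (simp only: mm_zero_left tensor_zero)
next
  fix x E M' assume hx: "x \<in> S1" and hE: "E \<in> T1" and IH: "mat_mult M' N \<in> tensor \<iota> S3 T3"
  have "mat_mult (smat \<iota> x E) N \<in> tensor \<iota> S3 T3"
  proof (rule tensor_induct[OF N, where P="\<lambda>N. mat_mult (smat \<iota> x E) N \<in> tensor \<iota> S3 T3"])
    show "mat_mult (smat \<iota> x E) 0 \<in> tensor \<iota> S3 T3" by (simp only: mm_zero_right tensor_zero)
  next
    fix y F N' assume hy: "y \<in> S2" and hF: "F \<in> T2" and IH2: "mat_mult (smat \<iota> x E) N' \<in> tensor \<iota> S3 T3"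
    have "smat \<iota> (x * y) (mat_mult E F) \<in> tensor \<iota> S3 T3"
      by (rule tensor_smat[OF S[OF hx hy] T[OF hE hF]])
    then have "mat_mult (smat \<iota> x E) (smat \<iota> y F) + mat_mult (smat \<iota> x E) N' \<in> tensor \<iota> S3 T3"
      unfolding mm_smat by (rule tensor_add[OF _ IH2])
    then show "mat_mult (smat \<iota> x E) (smat \<iota> y F + N') \<in> tensor \<iota> S3 T3" by (simp only: mm_add_right)
  qed
  then have "mat_mult (smat \<iota> x E) N + mat_mult M' N \<in> tensor \<iota> S3 T3"
    by (rule tensor_add[OF _ IH])
  then show "mat_mult (smat \<iota> x E + M') N \<in> tensor \<iota> S3 T3" by (simp only: mm_add_left)
qed

lemma Lam_smat: "linL L \<Longrightarrow> Lam \<iota> L (smat \<iota> x E) = x * \<iota> (L E)"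
proof -
  assume L: "linL L"
  have L1: "\<And>E F. L (E + F) = L E + L F" and L2: "\<And>c E. L (msc c E) = c * L E"
    using L unfolding linL_def by blast+
  have LE: "L E = (\<Sum>pq\<in>UNIV. E (fst pq) (snd pq) * L (emat (fst pq) (snd pq)))"
    by (rule lin_repr[OF L1 L2])
  have c: "\<iota> a * (x * \<iota> b) = x * \<iota> (b * a)" for a b
  proof -
    have c: "\<iota> a * x = x * \<iota> a" by (rule i_central)
    have "\<iota> a * (x * \<iota> b) = (\<iota> a * x) * \<iota> b" by (simp only: mult.assoc)
    also have "\<dots> = x * (\<iota> a * \<iota> b)" by (simp only: c mult.assoc)
    also have "\<dots> = x * \<iota> (b * a)" by (simp only: i_mult[symmetric] mult.commute)
    finally show ?thesis .
  qed
  have "Lam \<iota> L (smat \<iota> x E) = (\<Sum>pq\<in>UNIV. x * \<iota> (E (fst pq) (snd pq) * L (emat (fst pq) (snd pq))))"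
    unfolding Lam_def smat_apply c ..
  also have "\<dots> = x * \<iota> (L E)"
    unfolding LE i_sum sum_distrib_left ..
  finally show ?thesis .
qed

lemma Lam_in:
  assumes M: "M \<in> tensor \<iota> S T" and S: "ksub \<iota> S" and L: "linL L"
  shows "Lam \<iota> L M \<in> S"
proof (rule tensor_induct[OF M, where P="\<lambda>M. Lam \<iota> L M \<in> S"])
  show "Lam \<iota> L 0 \<in> S" unfolding Lam_zero using S by (simp add: ksub_def)
next
  fix x E N assume hx: "x \<in> S" and hE: "E \<in> T" and IH: "Lam \<iota> L N \<in> S"
  have "x * \<iota> (L E) = \<iota> (L E) * x" by (rule i_central[symmetric])
  also have "\<dots> \<in> S" using S hx by (simp add: ksub_def)
  finally have "x * \<iota> (L E) + Lam \<iota> L N \<in> S" using S IH by (simp add: ksub_def)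
  then show "Lam \<iota> L (smat \<iota> x E + N) \<in> S" by (simp only: Lam_add Lam_smat[OF L])
qed

lemma Lam_vanish:
  assumes M: "M \<in> tensor \<iota> S T" and L: "linL L" and V: "\<And>E. E \<in> T \<Longrightarrow> L E = 0"
  shows "Lam \<iota> L M = 0"
proof (rule tensor_induct[OF M, where P="\<lambda>M. Lam \<iota> L M = 0"])
  show "Lam \<iota> L 0 = 0" by (rule Lam_zero)
next
  fix x E N assume hx: "x \<in> S" and hE: "E \<in> T" and IH: "Lam \<iota> L N = 0"
  show "Lam \<iota> L (smat \<iota> x E + N) = 0"
    by (simp only: Lam_add Lam_smat[OF L] V[OF hE] IH i_zero mult_zero_right add_0)
qed

lemma decomp:
  assumes L: "\<And>u. linL (L u)"
    and D: "\<And>E. E \<in> T \<Longrightarrow> E - (\<Sum>u\<in>U. msc (L u E) u) \<in> T'"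
    and M: "M \<in> tensor \<iota> S T"
  shows "M - (\<Sum>u\<in>U. smat \<iota> (Lam \<iota> (L u) M) u) \<in> tensor \<iota> S T'"
proof (rule tensor_induct[OF M, where P="\<lambda>M. M - (\<Sum>u\<in>U. smat \<iota> (Lam \<iota> (L u) M) u) \<in> tensor \<iota> S T'"])
  show "0 - (\<Sum>u\<in>U. smat \<iota> (Lam \<iota> (L u) 0) u) \<in> tensor \<iota> S T'"
    by (simp only: Lam_zero smat_zero_left sum.neutral_const diff_zero tensor_zero)
next
  fix x E N assume hx: "x \<in> S" and hE: "E \<in> T"
    and IH: "N - (\<Sum>u\<in>U. smat \<iota> (Lam \<iota> (L u) N) u) \<in> tensor \<iota> S T'"
  have e1: "Lam \<iota> (L u) (smat \<iota> x E + N) = x * \<iota> (L u E) + Lam \<iota> (L u) N" for u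
    by (simp only: Lam_add Lam_smat[OF L])
  have e2: "smat \<iota> x (E - (\<Sum>u\<in>U. msc (L u E) u)) = smat \<iota> x E - (\<Sum>u\<in>U. smat \<iota> (x * \<iota> (L u E)) u)"
    by (simp only: smat_diff_right smat_sum_msc)
  have "(smat \<iota> x E + N) - (\<Sum>u\<in>U. smat \<iota> (Lam \<iota> (L u) (smat \<iota> x E + N)) u)
      = (smat \<iota> x E + N) - ((\<Sum>u\<in>U. smat \<iota> (x * \<iota> (L u E)) u) + (\<Sum>u\<in>U. smat \<iota> (Lam \<iota> (L u) N) u))"
    by (simp only: e1 smat_add_left sum.distrib)
  also have "\<dots> = (smat \<iota> x E - (\<Sum>u\<in>U. smat \<iota> (x * \<iota> (L u E)) u)) + (N - (\<Sum>u\<in>U. smat \<iota> (Lam \<iota> (L u) N) u))"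
    by (rule add_diff_add)
  also have "\<dots> = smat \<iota> x (E - (\<Sum>u\<in>U. msc (L u E) u)) + (N - (\<Sum>u\<in>U. smat \<iota> (Lam \<iota> (L u) N) u))"
    by (simp only: e2)
  also have "\<dots> \<in> tensor \<iota> S T'"
    by (rule tensor_add[OF tensor_smat[OF hx D[OF hE]] IH])
  finally show "(smat \<iota> x E + N) - (\<Sum>u\<in>U. smat \<iota> (Lam \<iota> (L u) (smat \<iota> x E + N)) u) \<in> tensor \<iota> S T'" .
qed

end

locale ilin = i1: ih \<iota>1 + i2: ih \<iota>2
  for \<iota>1 :: "'k::field \<Rightarrow> 'a::ring_1" and \<iota>2 :: "'k \<Rightarrow> 'b::ring_1" +
  fixes f :: "'a \<Rightarrow> 'b"
  assumes f_add: "\<And>x y. f (x + y) = f x + f y"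
    and f_lin: "\<And>c x. f (\<iota>1 c * x) = \<iota>2 c * f x"
begin

lemma f_zero[simp]: "f 0 = 0"
  using f_add[of 0 0] by simp

lemma f_minus: "f (- x) = - f x"
proof -
  have "f x + f (- x) = 0" using f_add[of x "- x"] by simp
  then show ?thesis by (rule minus_unique[symmetric])
qed

lemma f_diff: "f (x - y) = f x - f y"
  by (metis diff_conv_add_uminus f_add f_minus)

lemma f_sum: "f (sum g A) = (\<Sum>a\<in>A. f (g a))"
  by (induction A rule: infinite_finite_induct) (auto simp: f_add)

lemma f_right: "f (x * \<iota>1 c) = f x * \<iota>2 c"
proof -
  have "x * \<iota>1 c = \<iota>1 c * x" by (rule i1.i_central[symmetric])
  then have "f (x * \<iota>1 c) = \<iota>2 c * f x" by (simp only: f_lin)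
  then show ?thesis by (simp only: i2.i_central)
qed

lemma map_smat: "mat_map f (smat \<iota>1 x E) = smat \<iota>2 (f x) E"
  by (simp add: fun_eq_iff mat_map_def f_right)

lemma map_add: "mat_map f (M + N) = mat_map f M + mat_map f N"
  by (simp add: fun_eq_iff mat_map_def f_add)
lemma map_zero[simp]: "mat_map f 0 = 0"
  by (simp add: fun_eq_iff mat_map_def)
lemma map_neg: "mat_map f (- M) = - mat_map f M"
  by (simp add: fun_eq_iff mat_map_def f_minus)
lemma map_diff: "mat_map f (M - N) = mat_map f M - mat_map f N"
  by (simp add: fun_eq_iff mat_map_def f_diff)
lemma map_sum: "mat_map f (sum g I) = (\<Sum>i\<in>I. mat_map f (g i))"
  by (simp add: fun_eq_iff mat_map_def fun_sum_apply f_sum)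

lemma tensor_map:
  assumes M: "M \<in> tensor \<iota>1 S T" and S: "\<And>x. x \<in> S \<Longrightarrow> f x \<in> S'"
  shows "mat_map f M \<in> tensor \<iota>2 S' T"
proof (rule i1.tensor_induct[OF M, where P="\<lambda>M. mat_map f M \<in> tensor \<iota>2 S' T"])
  show "mat_map f 0 \<in> tensor \<iota>2 S' T" by (simp only: map_zero i2.tensor_zero)
next
  fix x E N assume hx: "x \<in> S" and hE: "E \<in> T" and IH: "mat_map f N \<in> tensor \<iota>2 S' T"
  have "smat \<iota>2 (f x) E + mat_map f N \<in> tensor \<iota>2 S' T"
    by (rule i2.tensor_add[OF i2.tensor_smat[OF S[OF hx] hE] IH])
  then show "mat_map f (smat \<iota>1 x E + N) \<in> tensor \<iota>2 S' T" by (simp only: map_add map_smat)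
qed

lemma f_Lam: "f (Lam \<iota>1 L M) = Lam \<iota>2 L (mat_map f M)"
  by (simp add: Lam_def f_sum f_lin mat_map_def)

end

locale rhom = ilin +
  assumes f_mult: "\<And>x y. f (x * y) = f x * f y"
begin

lemma map_mm: "mat_map f (mat_mult M N) = mat_mult (mat_map f M) (mat_map f N)"
  by (simp add: fun_eq_iff mat_map_def mat_mult_def f_sum f_mult)

end

section \<open>DGAs\<close>

locale dgl =
  fixes \<iota> :: "'k::field \<Rightarrow> 'a::ring_1" and A :: "nat \<Rightarrow> 'a set" and d :: "'a \<Rightarrow> 'a"
  assumes dga: "dga \<iota> A d"
begin

lemma ih: "ih \<iota>"
  unfolding ih_def using dga unfolding dga_def by (elim conjE) (intro conjI; assumption)

sublocale ih \<iota> by (rule ih)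

lemma d_add: "d (x + y) = d x + d y"
  using dga[unfolded dga_def, THEN conjunct2, THEN conjunct2, THEN conjunct2, THEN conjunct2, THEN conjunct2, THEN conjunct2, THEN conjunct2, THEN conjunct2, THEN conjunct2, THEN conjunct1] by blast
lemma d_lin: "d (\<iota> c * x) = \<iota> c * d x"
  using dga[unfolded dga_def, THEN conjunct2, THEN conjunct2, THEN conjunct2, THEN conjunct2, THEN conjunct2, THEN conjunct2, THEN conjunct2, THEN conjunct2, THEN conjunct2, THEN conjunct2, THEN conjunct1] by blast

sublocale D: ilin \<iota> \<iota> d
  by (unfold_locales; rule d_add d_lin)

lemma A_zero: "0 \<in> A i"
  using dga[unfolded dga_def, THEN conjunct2, THEN conjunct2, THEN conjunct2, THEN conjunct2, THEN conjunct1] by blast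
lemma A_add: "x \<in> A i \<Longrightarrow> y \<in> A i \<Longrightarrow> x + y \<in> A i"
  using dga[unfolded dga_def, THEN conjunct2, THEN conjunct2, THEN conjunct2, THEN conjunct2, THEN conjunct1] by blast
lemma A_scale: "x \<in> A i \<Longrightarrow> \<iota> c * x \<in> A i"
  using dga[unfolded dga_def, THEN conjunct2, THEN conjunct2, THEN conjunct2, THEN conjunct2, THEN conjunct1] by blast
lemma A_mult: "x \<in> A i \<Longrightarrow> y \<in> A j \<Longrightarrow> x * y \<in> A (i + j)"
  using dga[unfolded dga_def, THEN conjunct2, THEN conjunct2, THEN conjunct2, THEN conjunct2, THEN conjunct2, THEN conjunct1] by blast
lemma one_A: "1 \<in> A 0"
  using dga[unfolded dga_def, THEN conjunct2, THEN conjunct2, THEN conjunct2, THEN conjunct2, THEN conjunct2, THEN conjunct2, THEN conjunct1] by blast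
lemma d_A: "x \<in> A i \<Longrightarrow> d x \<in> A (Suc i)"
  using dga[unfolded dga_def, THEN conjunct2, THEN conjunct2, THEN conjunct2, THEN conjunct2, THEN conjunct2, THEN conjunct2, THEN conjunct2, THEN conjunct2, THEN conjunct2, THEN conjunct2, THEN conjunct2, THEN conjunct1] by blast
lemma d_d: "d (d x) = 0"
  using dga[unfolded dga_def, THEN conjunct2, THEN conjunct2, THEN conjunct2, THEN conjunct2, THEN conjunct2, THEN conjunct2, THEN conjunct2, THEN conjunct2, THEN conjunct2, THEN conjunct2, THEN conjunct2, THEN conjunct2, THEN conjunct1] by blast
lemma leib: "x \<in> A i \<Longrightarrow> d (x * y) = d x * y + (-1) ^ i * x * d y"
  using dga[unfolded dga_def, THEN conjunct2, THEN conjunct2, THEN conjunct2, THEN conjunct2, THEN conjunct2, THEN conjunct2, THEN conjunct2, THEN conjunct2, THEN conjunct2, THEN conjunct2, THEN conjunct2, THEN conjunct2, THEN conjunct2, THEN conjunct1] by blast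

lemma A_neg: "x \<in> A i \<Longrightarrow> - x \<in> A i"
  using A_scale[of x i "-1"] by (simp add: i_minus i_one)

lemma A_diff: "x \<in> A i \<Longrightarrow> y \<in> A i \<Longrightarrow> x - y \<in> A i"
  by (metis diff_conv_add_uminus A_add A_neg)

lemma ksub_A: "ksub \<iota> (A i)"
  by (auto simp: ksub_def A_zero A_add A_scale)

lemma iota_A: "\<iota> c \<in> A 0"
  using A_scale[OF one_A, of c] by simp

lemma d_one: "d 1 = 0"
  using leib[OF one_A, of 1] by simp

lemma d_iota: "d (\<iota> c) = 0"
  using d_lin[of c 1] by (simp add: d_one)

lemma Z0:
  assumes coh: "cohom_connected \<iota> A d" and x: "x \<in> A 0" "d x = 0"
  shows "\<exists>c. x = \<iota> c"
proof -
  obtain f where f: "bij_betw f (UNIV :: 'k set) (cocycles A d 0)" "\<And>c x. f (c * x) = \<iota> c * f x"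
    using coh unfolding cohom_connected_def by blast
  have fc: "f c = \<iota> c * f 1" for c using f(2)[of c 1] by simp
  have "1 \<in> cocycles A d 0" by (simp add: cocycles_def one_A d_one)
  then obtain c0 where c0: "1 = f c0" using f(1) unfolding bij_betw_def by blast
  have "x \<in> cocycles A d 0" using x by (simp add: cocycles_def)
  then obtain c1 where c1: "x = f c1" using f(1) unfolding bij_betw_def by blast
  have "c0 \<noteq> 0" using c0 fc[of c0] by auto
  have "f 1 = \<iota> (1 / c0) * (\<iota> c0 * f 1)"
    using \<open>c0 \<noteq> 0\<close> by (simp add: mult.assoc[symmetric] i_mult[symmetric] i_one)
  also have "\<dots> = \<iota> (1 / c0)" using c0 fc[of c0] by simp
  finally have "x = \<iota> c1 * \<iota> (1 / c0)" using c1 fc[of c1] by simp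
  then show ?thesis by (auto simp only: i_mult[symmetric])
qed

end

context dgl
begin

abbreviation D where "D \<equiv> mat_map d"

lemma D_mm0:
  assumes a: "\<And>p q. M p q \<in> A 0"
  shows "D (mat_mult M N) = mat_mult (D M) N + mat_mult M (D N)"
  by (simp add: fun_eq_iff mat_map_def mat_mult_def D.f_sum leib[OF a] sum.distrib)

lemma D_mm1:
  assumes a: "\<And>p q. M p q \<in> A 1"
  shows "D (mat_mult M N) = mat_mult (D M) N - mat_mult M (D N)"
  by (simp add: fun_eq_iff mat_map_def mat_mult_def D.f_sum leib[OF a] sum_subtractf)

lemma DD: "D (D M) = 0"
  by (simp add: fun_eq_iff mat_map_def d_d)

lemma MC:
  assumes "Fnil_obj \<iota> A d W \<omega>" and half: "(1/2 + 1/2 :: 'k) = 1"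
  shows "D \<omega> = - mat_mult \<omega> \<omega>"
proof -
  have "\<iota> (1/2) * (m + m) = m" for m
  proof -
    have "\<iota> (1/2) * (m + m) = (\<iota> (1/2) + \<iota> (1/2)) * m" by (simp only: distrib_left distrib_right)
    also have "\<dots> = m" by (simp only: i_add[symmetric] half i_one mult_1_left)
    finally show ?thesis .
  qed
  then show ?thesis using assms(1)
    by (auto simp: fun_eq_iff Fnil_obj_def mat_bracket_def mat_map_def eq_neg_iff_add_eq_0)
qed

lemma dc:
  assumes a: "\<And>p q. a p q \<in> A 0" and w1: "\<And>p q. \<omega>1 p q \<in> A 1" and w2: "\<And>p q. \<omega>2 p q \<in> A 1"
    and m1: "D \<omega>1 = - mat_mult \<omega>1 \<omega>1" and m2: "D \<omega>2 = - mat_mult \<omega>2 \<omega>2"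
  shows "D (D a + mat_mult \<omega>1 a - mat_mult a \<omega>2) =
     - mat_mult \<omega>1 (D a + mat_mult \<omega>1 a - mat_mult a \<omega>2) - mat_mult (D a + mat_mult \<omega>1 a - mat_mult a \<omega>2) \<omega>2"
  by (simp add: D.map_add D.map_diff DD D_mm0[OF a] D_mm1[OF w1] m1 m2 mm_simps algebra_simps)

end

section \<open>Filtration facts\<close>

lemma W_mono:
  assumes F: "incr_filtration W" and ij: "i \<le> j"
  shows "W i \<subseteq> W j"
proof -
  have stp: "W k \<subseteq> W (k + 1)" for k using F unfolding incr_filtration_def by blast
  show ?thesis
  proof (rule int_ge_induct[OF ij, where P="\<lambda>j. W i \<subseteq> W j"])
    show "W i \<subseteq> W i" by (rule order_refl)
  next
    fix k assume "i \<le> k" and h: "W i \<subseteq> W k"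
    show "W i \<subseteq> W (k + 1)" using h stp[of k] by (rule order_trans)
  qed
qed

lemma WE_mono:
  assumes F: "incr_filtration W" and kl: "k \<le> l"
  shows "W_End W k \<subseteq> W_End W l"
proof
  fix E assume E: "E \<in> W_End W k"
  show "E \<in> W_End W l" unfolding W_End_def
  proof (intro CollectI allI ballI)
    fix i v assume v: "v \<in> W i"
    have "endo_apply E v \<in> W (i + k)" using E v unfolding W_End_def by blast
    moreover have "W (i + k) \<subseteq> W (i + l)" by (rule W_mono[OF F]) (use kl in simp)
    ultimately show "endo_apply E v \<in> W (i + l)" by blast
  qed
qed

lemma endo_mm: "endo_apply (mat_mult E F) v = endo_apply E (endo_apply F v)"
  unfolding endo_apply_def mat_mult_def fun_eq_iff
  apply (intro allI)
  apply (simp only: sum_distrib_left sum_distrib_right mult.assoc)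
  apply (rule sum.swap)
  done

lemma WE_mult:
  assumes E: "E \<in> W_End W k" and F: "F \<in> W_End W l"
  shows "mat_mult E F \<in> W_End W (k + l)"
  unfolding W_End_def
proof (intro CollectI allI ballI)
  fix i v assume v: "v \<in> W i"
  have "endo_apply F v \<in> W (i + l)" using F v unfolding W_End_def by blast
  then have "endo_apply E (endo_apply F v) \<in> W (i + l + k)" using E unfolding W_End_def by blast
  moreover have "i + l + k = i + (k + l)" by simp
  ultimately show "endo_apply (mat_mult E F) v \<in> W (i + (k + l))" by (simp add: endo_mm)
qed

lemma WE_sub:
  assumes F: "incr_filtration W"
  shows "MS.subspace (W_End W k)"
proof -
  have sub: "is_subspace (W j)" for j using F unfolding incr_filtration_def by blast
  have e0: "endo_apply 0 v = (\<lambda>_. 0)" for v by (simp add: endo_apply_def)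
  have eadd: "endo_apply (E + G) v = (\<lambda>p. endo_apply E v p + endo_apply G v p)" for E G v
    by (simp add: endo_apply_def distrib_right sum.distrib)
  have esc: "endo_apply (msc c E) v = (\<lambda>p. c * endo_apply E v p)" for c E v
    by (simp add: endo_apply_def sum_distrib_left mult.assoc)
  show ?thesis
    unfolding MS.subspace_def W_End_def
  proof (intro conjI ballI allI CollectI)
    fix i v assume "v \<in> W i"
    show "endo_apply 0 v \<in> W (i + k)" unfolding e0 using sub unfolding is_subspace_def by blast
  next
    fix E G i v assume E: "E \<in> {E. \<forall>i. \<forall>v\<in>W i. endo_apply E v \<in> W (i + k)}"
      and G: "G \<in> {E. \<forall>i. \<forall>v\<in>W i. endo_apply E v \<in> W (i + k)}" and v: "v \<in> W i"
    have "endo_apply E v \<in> W (i + k)" "endo_apply G v \<in> W (i + k)" using E G v by blast+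
    then show "endo_apply (E + G) v \<in> W (i + k)" unfolding eadd
      using sub[of "i + k"] unfolding is_subspace_def by blast
  next
    fix c E i v assume E: "E \<in> {E. \<forall>i. \<forall>v\<in>W i. endo_apply E v \<in> W (i + k)}" and v: "v \<in> W i"
    have "endo_apply E v \<in> W (i + k)" using E v by blast
    then show "endo_apply (msc c E) v \<in> W (i + k)" unfolding esc
      using sub[of "i + k"] unfolding is_subspace_def by blast
  qed
qed

definition kid :: "'n \<Rightarrow> 'n \<Rightarrow> 'k::field" where
  "kid = (\<lambda>p q. if p = q then 1 else 0)"

lemma endo_unit: "endo_apply E (\<lambda>r. if r = q then 1 else 0) p = (E p q :: 'k::field)"
proof -
  have "endo_apply E (\<lambda>r. if r = q then 1 else 0) p = (\<Sum>r\<in>UNIV. if r = q then E p r else 0)"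
    unfolding endo_apply_def by (rule sum.cong) auto
  also have "\<dots> = E p q" by simp
  finally show ?thesis .
qed

lemma WE_id:
  fixes W :: "int \<Rightarrow> ('n::finite \<Rightarrow> 'k::field) set"
  shows "kid \<in> W_End W 0"
proof -
  have "endo_apply kid v = v" for v :: "'n \<Rightarrow> 'k"
  proof
    fix p
    have "endo_apply kid v p = (\<Sum>q\<in>UNIV. if p = q then v q else 0)"
      unfolding endo_apply_def kid_def by (rule sum.cong) auto
    also have "\<dots> = v p" by simp
    finally show "endo_apply kid v p = v p" .
  qed
  then show ?thesis unfolding W_End_def by simp
qed

lemma WE_triv:
  assumes F: "incr_filtration W"
  shows "\<exists>N::nat. W_End W (- int N) \<subseteq> {0}"
proof -
  obtain a b where Wa: "W a = {\<lambda>_. 0}" and Wb: "W b = UNIV"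
    using F unfolding incr_filtration_def by blast
  have "W_End W (- int (nat (b - a))) \<subseteq> {0}"
  proof
    fix E assume E: "E \<in> W_End W (- int (nat (b - a)))"
    have "E p q = 0" for p q
    proof -
      let ?v = "\<lambda>r. if r = q then 1 else 0"
      have "?v \<in> W b" using Wb by simp
      then have "endo_apply E ?v \<in> W (b + - int (nat (b - a)))" using E unfolding W_End_def by blast
      moreover have "W (b + - int (nat (b - a))) \<subseteq> W a" by (rule W_mono[OF F]) simp
      ultimately have "endo_apply E ?v = (\<lambda>_. 0)" using Wa by blast
      then have "endo_apply E ?v p = 0" by simp
      then show ?thesis by (simp add: endo_unit)
    qed
    then show "E \<in> {0}" by (simp add: fun_eq_iff)
  qed
  then show ?thesis by blast
qed

lemma ab_iso: "(x::'g::ab_group_add) + y - z = 0 \<Longrightarrow> x = z - y"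
  by (simp add: algebra_simps)

lemma ab_key: "(B::'g::ab_group_add) = X - Y \<Longrightarrow> - ((B - P) + (Y - Q) - (X - R)) = P + Q - R"
  by (simp add: algebra_simps)

lemma ab_solve: "(Z::'g::ab_group_add) = - (X + Y - V) \<Longrightarrow> X = - Z - Y + V"
  by (simp add: algebra_simps)

lemma hom_iff: "Fnil_hom \<iota> A d W \<omega>1 \<omega>2 =
   {a. a \<in> tensor \<iota> (A 0) (W_End W 0) \<and> mat_map d a + mat_mult \<omega>1 a - mat_mult a \<omega>2 = 0}"
  by (auto simp: Fnil_hom_def fun_eq_iff mat_map_def)

definition Imat :: "'n \<Rightarrow> 'n \<Rightarrow> 'a::ring_1" where
  "Imat = (\<lambda>p q. if p = q then 1 else 0)"

lemma gr_iff: "Fnil_gr_hom \<iota> A d W \<omega>1 \<omega>2 =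
   {a. a - Imat \<in> tensor \<iota> (A 0) (W_End W (-1)) \<and> mat_map d a + mat_mult \<omega>1 a - mat_mult a \<omega>2 = 0}"
proof -
  have e: "(\<lambda>p q. a p q - (if p = q then 1 else 0)) = a - Imat" for a :: "'a \<Rightarrow> 'a \<Rightarrow> 'b::ring_1"
    by (simp add: fun_eq_iff Imat_def)
  show ?thesis unfolding Fnil_gr_hom_def e by (auto simp: fun_eq_iff mat_map_def)
qed

locale setting =
  D1: dgl \<iota>1 A1 d1 + D2: dgl \<iota>2 A2 d2
  for \<iota>1 :: "'k::field \<Rightarrow> 'a::ring_1" and A1 d1 and \<iota>2 :: "'k \<Rightarrow> 'b::ring_1" and A2 d2 +
  fixes \<phi> :: "'a \<Rightarrow> 'b" and W :: "int \<Rightarrow> ('n::finite \<Rightarrow> 'k) set"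
  assumes coh2: "cohom_connected \<iota>2 A2 d2"
    and hom: "dga_hom \<iota>1 A1 d1 \<iota>2 A2 d2 \<phi>"
    and iso0: "induces_cohom_iso A1 d1 A2 d2 \<phi> 0"
    and iso1: "induces_cohom_iso A1 d1 A2 d2 \<phi> 1"
    and filt: "incr_filtration W"
    and half: "(1/2 + 1/2 :: 'k) = 1"
begin

lemma phi_add: "\<phi> (x + y) = \<phi> x + \<phi> y" using hom unfolding dga_hom_def by blast
lemma phi_mult: "\<phi> (x * y) = \<phi> x * \<phi> y" using hom unfolding dga_hom_def by blast
lemma phi_iota: "\<phi> (\<iota>1 c) = \<iota>2 c" using hom unfolding dga_hom_def by blast
lemma phi_one: "\<phi> 1 = 1" using hom unfolding dga_hom_def by blast
lemma phi_A: "x \<in> A1 i \<Longrightarrow> \<phi> x \<in> A2 i" using hom unfolding dga_hom_def by blast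
lemma phi_d: "\<phi> (d1 x) = d2 (\<phi> x)" using hom unfolding dga_hom_def by blast

sublocale P: rhom \<iota>1 \<iota>2 \<phi>
proof (rule rhom.intro)
  show "ilin \<iota>1 \<iota>2 \<phi>"
  proof (rule ilin.intro[OF D1.ih D2.ih])
    show "ilin_axioms \<iota>1 \<iota>2 \<phi>"
      by (rule ilin_axioms.intro) (simp_all only: phi_add phi_mult phi_iota)
  qed
  show "rhom_axioms \<phi>" by (rule rhom_axioms.intro) (rule phi_mult)
qed

abbreviation "WE k \<equiv> W_End W k"

lemma phiD: "mat_map \<phi> (mat_map d1 M) = mat_map d2 (mat_map \<phi> M)"
  by (simp add: fun_eq_iff mat_map_def phi_d)

lemma tm1:
  assumes "M \<in> tensor \<iota>1 (A1 i) (WE k)" "N \<in> tensor \<iota>1 (A1 j) (WE l)" "i + j = i'" "k + l = k'"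
  shows "mat_mult M N \<in> tensor \<iota>1 (A1 i') (WE k')"
  using D1.tensor_mult[OF assms(1,2), of "A1 i'" "WE k'"] D1.A_mult WE_mult assms(3,4) by blast

lemma tm2:
  assumes "M \<in> tensor \<iota>2 (A2 i) (WE k)" "N \<in> tensor \<iota>2 (A2 j) (WE l)" "i + j = i'" "k + l = k'"
  shows "mat_mult M N \<in> tensor \<iota>2 (A2 i') (WE k')"
  using D2.tensor_mult[OF assms(1,2), of "A2 i'" "WE k'"] D2.A_mult WE_mult assms(3,4) by blast

lemma U1: "M \<in> tensor \<iota>1 S T \<Longrightarrow> M \<in> tensor \<iota>1 UNIV T"
  by (erule D1.tensor_mono) auto
lemma U2: "M \<in> tensor \<iota>2 S T \<Longrightarrow> M \<in> tensor \<iota>2 UNIV T"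
  by (erule D2.tensor_mono) auto

lemma W1: "M \<in> tensor \<iota>1 S (WE k) \<Longrightarrow> k \<le> l \<Longrightarrow> M \<in> tensor \<iota>1 S (WE l)"
  by (erule D1.tensor_mono) (auto intro: WE_mono[OF filt, THEN subsetD])
lemma W2: "M \<in> tensor \<iota>2 S (WE k) \<Longrightarrow> k \<le> l \<Longrightarrow> M \<in> tensor \<iota>2 S (WE l)"
  by (erule D2.tensor_mono) (auto intro: WE_mono[OF filt, THEN subsetD])

lemma LA':
  assumes "k' \<le> k"
  shows "\<exists>U L. finite U \<and> U \<subseteq> WE k \<and> (\<forall>u\<in>U. \<forall>E\<in>WE k'. L u E = 0) \<and>
    (\<forall>u. linL (L u)) \<and> (\<forall>E\<in>WE k. E - (\<Sum>u\<in>U. msc (L u E) u) \<in> WE k')"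
proof -
  from LA[OF WE_sub[OF filt] WE_mono[OF filt assms]] obtain U L where
    h: "finite U" "U \<subseteq> WE k" "\<forall>u\<in>U. \<forall>E\<in>WE k'. L u E = 0"
    "\<forall>u E F. L u (E + F) = L u E + L u F" "\<forall>u c E. L u (msc c E) = c * L u E"
    "\<forall>E\<in>WE k. E - (\<Sum>u\<in>U. msc (L u E) u) \<in> WE k'"
    by blast
  have "\<forall>u. linL (L u)" unfolding linL_def using h(4,5) by blast
  then show ?thesis using h(1,2,3,6) by blast
qed

lemma negA1: "x \<in> A1 i \<Longrightarrow> - x \<in> A1 i" by (rule D1.A_neg)
lemma negA2: "x \<in> A2 i \<Longrightarrow> - x \<in> A2 i" by (rule D2.A_neg)

lemma step_inj:
  assumes M: "M \<in> tensor \<iota>1 (A1 0) (WE k)" and kk: "k' \<le> k"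
    and DM: "mat_map d1 M \<in> tensor \<iota>1 UNIV (WE k')" and PM: "mat_map \<phi> M \<in> tensor \<iota>2 UNIV (WE k')"
  shows "M \<in> tensor \<iota>1 (A1 0) (WE k')"
proof -
  obtain U L where U: "finite U" "U \<subseteq> WE k" and V0: "\<forall>u\<in>U. \<forall>E\<in>WE k'. L u E = 0"
    and lin0: "\<forall>u. linL (L u)" and dec0: "\<forall>E\<in>WE k. E - (\<Sum>u\<in>U. msc (L u E) u) \<in> WE k'"
    using LA'[OF kk] by blast
  have V: "\<And>u E. u \<in> U \<Longrightarrow> E \<in> WE k' \<Longrightarrow> L u E = 0" using V0 by blast
  have lin: "\<And>u. linL (L u)" using lin0 by blast
  have dec: "\<And>E. E \<in> WE k \<Longrightarrow> E - (\<Sum>u\<in>U. msc (L u E) u) \<in> WE k'" using dec0 by blast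
  have x0: "Lam \<iota>1 (L u) M = 0" if u: "u \<in> U" for u
  proof -
    have xA: "Lam \<iota>1 (L u) M \<in> A1 0" by (rule D1.Lam_in[OF M D1.ksub_A lin])
    have "d1 (Lam \<iota>1 (L u) M) = Lam \<iota>1 (L u) (mat_map d1 M)" by (rule D1.D.f_Lam)
    also have "\<dots> = 0" by (rule D1.Lam_vanish[OF DM lin V[OF u]])
    finally have dx: "d1 (Lam \<iota>1 (L u) M) = 0" .
    have "\<phi> (Lam \<iota>1 (L u) M) = Lam \<iota>2 (L u) (mat_map \<phi> M)" by (rule P.f_Lam)
    also have "\<dots> = 0" by (rule D2.Lam_vanish[OF PM lin V[OF u]])
    finally have px: "\<phi> (Lam \<iota>1 (L u) M) = 0" .
    have "Lam \<iota>1 (L u) M \<in> cocycles A1 d1 0" using xA dx by (simp add: cocycles_def)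
    moreover have "\<phi> (Lam \<iota>1 (L u) M) \<in> coboundaries A2 d2 0" using px by simp
    ultimately have "Lam \<iota>1 (L u) M \<in> coboundaries A1 d1 0"
      using iso0 unfolding induces_cohom_iso_def by blast
    then show ?thesis by simp
  qed
  have "M - (\<Sum>u\<in>U. smat \<iota>1 (Lam \<iota>1 (L u) M) u) \<in> tensor \<iota>1 (A1 0) (WE k')"
    by (rule D1.decomp[OF lin dec M])
  moreover have "(\<Sum>u\<in>U. smat \<iota>1 (Lam \<iota>1 (L u) M) u) = 0"
    by (rule sum.neutral) (simp add: x0)
  ultimately show ?thesis by simp
qed

lemma tensor_zero_top:
  obtains N :: nat where "\<And>k M S. k \<le> - int N \<Longrightarrow> M \<in> tensor \<iota>1 S (WE k) \<Longrightarrow> M = 0"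
    "\<And>k M S. k \<le> - int N \<Longrightarrow> M \<in> tensor \<iota>2 S (WE k) \<Longrightarrow> M = 0"
proof -
  obtain N :: nat where N: "WE (- int N) \<subseteq> {0}" using WE_triv[OF filt] by blast
  show ?thesis
  proof (rule that[of N])
    fix k M S assume k: "k \<le> - int N" and M: "M \<in> tensor \<iota>1 S (WE k)"
    show "M = 0" by (rule D1.tensor_triv[OF M]) (use WE_mono[OF filt k] N in blast)
  next
    fix k M S assume k: "k \<le> - int N" and M: "M \<in> tensor \<iota>2 S (WE k)"
    show "M = 0" by (rule D2.tensor_triv[OF M]) (use WE_mono[OF filt k] N in blast)
  qed
qed

lemma obj:
  assumes "Fnil_obj \<iota>1 A1 d1 W \<omega>"
  shows "\<omega> \<in> tensor \<iota>1 (A1 1) (WE (-1))" "\<And>p q. \<omega> p q \<in> A1 1" "mat_map d1 \<omega> = - mat_mult \<omega> \<omega>"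
    "mat_map \<phi> \<omega> \<in> tensor \<iota>2 (A2 1) (WE (-1))"
    "mat_map d2 (mat_map \<phi> \<omega>) = - mat_mult (mat_map \<phi> \<omega>) (mat_map \<phi> \<omega>)"
proof -
  show w: "\<omega> \<in> tensor \<iota>1 (A1 1) (WE (-1))" using assms unfolding Fnil_obj_def by blast
  show "\<omega> p q \<in> A1 1" for p q by (rule D1.tensor_entry[OF w D1.ksub_A])
  show m: "mat_map d1 \<omega> = - mat_mult \<omega> \<omega>" by (rule D1.MC[OF assms half])
  show "mat_map \<phi> \<omega> \<in> tensor \<iota>2 (A2 1) (WE (-1))" by (rule P.tensor_map[OF w phi_A])
  have "mat_map d2 (mat_map \<phi> \<omega>) = mat_map \<phi> (mat_map d1 \<omega>)" by (rule phiD[symmetric])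
  also have "\<dots> = - mat_mult (mat_map \<phi> \<omega>) (mat_map \<phi> \<omega>)" by (simp only: m P.map_neg P.map_mm)
  finally show "mat_map d2 (mat_map \<phi> \<omega>) = - mat_mult (mat_map \<phi> \<omega>) (mat_map \<phi> \<omega>)" .
qed

lemma map_hom:
  assumes "a \<in> Fnil_hom \<iota>1 A1 d1 W \<omega>1 \<omega>2"
  shows "mat_map \<phi> a \<in> Fnil_hom \<iota>2 A2 d2 W (mat_map \<phi> \<omega>1) (mat_map \<phi> \<omega>2)"
proof -
  have a: "a \<in> tensor \<iota>1 (A1 0) (WE 0)" and e: "mat_map d1 a + mat_mult \<omega>1 a - mat_mult a \<omega>2 = 0"
    using assms unfolding hom_iff by blast+
  have "mat_map d2 (mat_map \<phi> a) + mat_mult (mat_map \<phi> \<omega>1) (mat_map \<phi> a) - mat_mult (mat_map \<phi> a) (mat_map \<phi> \<omega>2)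
     = mat_map \<phi> (mat_map d1 a + mat_mult \<omega>1 a - mat_mult a \<omega>2)"
    by (simp only: P.map_add P.map_diff P.map_mm phiD)
  also have "\<dots> = 0" by (simp only: e P.map_zero)
  finally show ?thesis unfolding hom_iff using P.tensor_map[OF a phi_A] by blast
qed

end

context setting
begin

lemma hom_inj:
  assumes o1: "Fnil_obj \<iota>1 A1 d1 W \<omega>1" and o2: "Fnil_obj \<iota>1 A1 d1 W \<omega>2"
    and a: "a \<in> Fnil_hom \<iota>1 A1 d1 W \<omega>1 \<omega>2" and a': "a' \<in> Fnil_hom \<iota>1 A1 d1 W \<omega>1 \<omega>2"
    and eq: "mat_map \<phi> a = mat_map \<phi> a'"
  shows "a = a'"
proof -
  have at: "a \<in> tensor \<iota>1 (A1 0) (WE 0)" and ae: "mat_map d1 a + mat_mult \<omega>1 a - mat_mult a \<omega>2 = 0"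
    using a unfolding hom_iff by blast+
  have at': "a' \<in> tensor \<iota>1 (A1 0) (WE 0)" and ae': "mat_map d1 a' + mat_mult \<omega>1 a' - mat_mult a' \<omega>2 = 0"
    using a' unfolding hom_iff by blast+
  define M where "M = a - a'"
  have M0: "M \<in> tensor \<iota>1 (A1 0) (WE 0)" unfolding M_def by (rule D1.tensor_diff[OF negA1 at at'])
  have da: "mat_map d1 a = mat_mult a \<omega>2 - mat_mult \<omega>1 a" by (rule ab_iso[OF ae])
  have da': "mat_map d1 a' = mat_mult a' \<omega>2 - mat_mult \<omega>1 a'" by (rule ab_iso[OF ae'])
  have DM: "mat_map d1 M = mat_mult M \<omega>2 - mat_mult \<omega>1 M"
    unfolding M_def D1.D.map_diff da da' mm_diff_left mm_diff_right by (simp add: algebra_simps)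
  have PM: "mat_map \<phi> M = 0" unfolding M_def P.map_diff eq by simp
  have w1: "\<omega>1 \<in> tensor \<iota>1 (A1 1) (WE (-1))" and w2: "\<omega>2 \<in> tensor \<iota>1 (A1 1) (WE (-1))"
    using obj(1)[OF o1] obj(1)[OF o2] .
  have all: "M \<in> tensor \<iota>1 (A1 0) (WE (- int m))" for m
  proof (induction m)
    case 0
    then show ?case using M0 by simp
  next
    case (Suc m)
    have m1: "mat_mult M \<omega>2 \<in> tensor \<iota>1 (A1 1) (WE (- int m - 1))" by (rule tm1[OF Suc.IH w2]) simp_all
    have m2: "mat_mult \<omega>1 M \<in> tensor \<iota>1 (A1 1) (WE (- int m - 1))" by (rule tm1[OF w1 Suc.IH]) simp_all
    have "mat_map d1 M \<in> tensor \<iota>1 (A1 1) (WE (- int m - 1))"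
      unfolding DM by (rule D1.tensor_diff[OF negA1 m1 m2])
    then have DM': "mat_map d1 M \<in> tensor \<iota>1 UNIV (WE (- int m - 1))" by (rule U1)
    have PM': "mat_map \<phi> M \<in> tensor \<iota>2 UNIV (WE (- int m - 1))" unfolding PM by (rule D2.tensor_zero)
    have "M \<in> tensor \<iota>1 (A1 0) (WE (- int m - 1))" by (rule step_inj[OF Suc.IH _ DM' PM']) simp
    moreover have "- int m - 1 = - int (Suc m)" by simp
    ultimately show ?case by simp
  qed
  obtain N :: nat where N: "\<And>k M S. k \<le> - int N \<Longrightarrow> M \<in> tensor \<iota>1 S (WE k) \<Longrightarrow> M = 0"
    by (rule tensor_zero_top) blast
  have "M = 0" by (rule N[OF order_refl all])
  then show ?thesis unfolding M_def by simp
qed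

end

context setting
begin

context
  fixes \<omega>1 \<omega>2 b
  assumes o1: "Fnil_obj \<iota>1 A1 d1 W \<omega>1" and o2: "Fnil_obj \<iota>1 A1 d1 W \<omega>2"
    and bh: "b \<in> Fnil_hom \<iota>2 A2 d2 W (mat_map \<phi> \<omega>1) (mat_map \<phi> \<omega>2)"
begin

abbreviation "cc a \<equiv> mat_map d1 a + mat_mult \<omega>1 a - mat_mult a \<omega>2"
abbreviation "ee a \<equiv> b - mat_map \<phi> a"
abbreviation "p1 \<equiv> mat_map \<phi> \<omega>1"
abbreviation "p2 \<equiv> mat_map \<phi> \<omega>2"

lemma bt: "b \<in> tensor \<iota>2 (A2 0) (WE 0)" and be: "mat_map d2 b + mat_mult p1 b - mat_mult b p2 = 0"
  using bh unfolding hom_iff by blast+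

lemma w1: "\<omega>1 \<in> tensor \<iota>1 (A1 1) (WE (-1))" and w2: "\<omega>2 \<in> tensor \<iota>1 (A1 1) (WE (-1))"
  and pw1: "p1 \<in> tensor \<iota>2 (A2 1) (WE (-1))" and pw2: "p2 \<in> tensor \<iota>2 (A2 1) (WE (-1))"
  using obj(1)[OF o1] obj(1)[OF o2] obj(4)[OF o1] obj(4)[OF o2] by blast+

lemma key: "mat_map \<phi> (cc a) = - (mat_map d2 (ee a) + mat_mult p1 (ee a) - mat_mult (ee a) p2)"
proof -
  have bb: "mat_map d2 b = mat_mult b p2 - mat_mult p1 b" by (rule ab_iso[OF be])
  have "- (mat_map d2 (ee a) + mat_mult p1 (ee a) - mat_mult (ee a) p2)
      = - ((mat_map d2 b - mat_map d2 (mat_map \<phi> a)) + (mat_mult p1 b - mat_mult p1 (mat_map \<phi> a))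
           - (mat_mult b p2 - mat_mult (mat_map \<phi> a) p2))"
    by (simp only: D2.D.map_diff mm_diff_left mm_diff_right)
  also have "\<dots> = mat_map d2 (mat_map \<phi> a) + mat_mult p1 (mat_map \<phi> a) - mat_mult (mat_map \<phi> a) p2"
    by (rule ab_key[OF bb])
  also have "\<dots> = mat_map \<phi> (cc a)"
    by (simp only: P.map_add P.map_diff phiD P.map_mm)
  finally show ?thesis by (rule sym)
qed

lemma De:
  assumes c: "cc a \<in> tensor \<iota>1 (A1 1) (WE (k - 1))" and e: "ee a \<in> tensor \<iota>2 (A2 0) (WE k)"
  shows "mat_map d2 (ee a) \<in> tensor \<iota>2 UNIV (WE (k - 1))"
proof -
  have eq: "mat_map d2 (ee a) = - mat_map \<phi> (cc a) - mat_mult p1 (ee a) + mat_mult (ee a) p2"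
    by (rule ab_solve[OF key])
  have t1: "mat_map \<phi> (cc a) \<in> tensor \<iota>2 UNIV (WE (k - 1))" by (rule U2[OF P.tensor_map[OF c phi_A]])
  have t2: "mat_mult p1 (ee a) \<in> tensor \<iota>2 UNIV (WE (k - 1))" by (rule U2[OF tm2[OF pw1 e]]) simp_all
  have t3: "mat_mult (ee a) p2 \<in> tensor \<iota>2 UNIV (WE (k - 1))" by (rule U2[OF tm2[OF e pw2]]) simp_all
  show ?thesis unfolding eq
    by (rule D2.tensor_add[OF D2.tensor_diff[OF _ D2.tensor_neg[OF t1] t2] t3]) simp_all
qed

lemma half1:
  assumes a: "a \<in> tensor \<iota>1 (A1 0) (WE 0)" and k: "k \<le> 0"
    and e: "ee a \<in> tensor \<iota>2 (A2 0) (WE k)" and c: "cc a \<in> tensor \<iota>1 (A1 1) (WE (k - 1))"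
  shows "\<exists>a'. a' \<in> tensor \<iota>1 (A1 0) (WE 0) \<and> ee a' \<in> tensor \<iota>2 (A2 0) (WE (k - 1)) \<and>
     cc a' \<in> tensor \<iota>1 (A1 1) (WE (k - 1))"
proof -
  obtain U L where U: "finite U" "U \<subseteq> WE k" and V0: "\<forall>u\<in>U. \<forall>E\<in>WE (k - 1). L u E = 0"
    and lin0: "\<forall>u. linL (L u)" and dec0: "\<forall>E\<in>WE k. E - (\<Sum>u\<in>U. msc (L u E) u) \<in> WE (k - 1)"
    using LA'[of "k - 1" k] by auto
  have V: "\<And>u E. u \<in> U \<Longrightarrow> E \<in> WE (k - 1) \<Longrightarrow> L u E = 0" using V0 by blast
  have lin: "\<And>u. linL (L u)" using lin0 by blast
  have dec: "\<And>E. E \<in> WE k \<Longrightarrow> E - (\<Sum>u\<in>U. msc (L u E) u) \<in> WE (k - 1)" using dec0 by blast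
  have DE: "mat_map d2 (ee a) \<in> tensor \<iota>2 UNIV (WE (k - 1))" by (rule De[OF c e])
  have "\<exists>c. Lam \<iota>2 (L u) (ee a) = \<iota>2 c" if u: "u \<in> U" for u
  proof (rule D2.Z0[OF coh2])
    show "Lam \<iota>2 (L u) (ee a) \<in> A2 0" by (rule D2.Lam_in[OF e D2.ksub_A lin])
    have "d2 (Lam \<iota>2 (L u) (ee a)) = Lam \<iota>2 (L u) (mat_map d2 (ee a))" by (rule D2.D.f_Lam)
    also have "\<dots> = 0" by (rule D2.Lam_vanish[OF DE lin V[OF u]])
    finally show "d2 (Lam \<iota>2 (L u) (ee a)) = 0" .
  qed
  then obtain kf where kf: "\<And>u. u \<in> U \<Longrightarrow> Lam \<iota>2 (L u) (ee a) = \<iota>2 (kf u)" by metis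
  define G where "G = (\<Sum>u\<in>U. smat \<iota>1 (\<iota>1 (kf u)) u)"
  have Gk: "G \<in> tensor \<iota>1 (A1 0) (WE k)" unfolding G_def
    by (rule D1.tensor_sum, rule D1.tensor_smat[OF D1.iota_A]) (use U in blast)
  have G0: "G \<in> tensor \<iota>1 (A1 0) (WE 0)" by (rule W1[OF Gk k])
  have DG: "mat_map d1 G = 0" unfolding G_def D1.D.map_sum
    by (rule sum.neutral) (simp add: D1.D.map_smat D1.d_iota)
  have PG: "mat_map \<phi> G = (\<Sum>u\<in>U. smat \<iota>2 (Lam \<iota>2 (L u) (ee a)) u)"
    unfolding G_def P.map_sum by (rule sum.cong) (simp_all add: P.map_smat phi_iota kf)
  show ?thesis
  proof (intro exI conjI)
    show "a + G \<in> tensor \<iota>1 (A1 0) (WE 0)" by (rule D1.tensor_add[OF a G0])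
    have "ee (a + G) = ee a - (\<Sum>u\<in>U. smat \<iota>2 (Lam \<iota>2 (L u) (ee a)) u)"
      by (simp only: P.map_add PG diff_diff_eq)
    also have "\<dots> \<in> tensor \<iota>2 (A2 0) (WE (k - 1))" by (rule D2.decomp[OF lin dec e])
    finally show "ee (a + G) \<in> tensor \<iota>2 (A2 0) (WE (k - 1))" .
    have "cc (a + G) = cc a + (mat_mult \<omega>1 G - mat_mult G \<omega>2)"
      by (simp add: D1.D.map_add DG mm_add_left mm_add_right algebra_simps)
    also have "\<dots> \<in> tensor \<iota>1 (A1 1) (WE (k - 1))"
    proof (rule D1.tensor_add[OF c D1.tensor_diff[OF negA1]])
      show "mat_mult \<omega>1 G \<in> tensor \<iota>1 (A1 1) (WE (k - 1))" by (rule tm1[OF w1 Gk]) simp_all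
      show "mat_mult G \<omega>2 \<in> tensor \<iota>1 (A1 1) (WE (k - 1))" by (rule tm1[OF Gk w2]) simp_all
    qed
    finally show "cc (a + G) \<in> tensor \<iota>1 (A1 1) (WE (k - 1))" .
  qed
qed

lemma half2:
  assumes a: "a \<in> tensor \<iota>1 (A1 0) (WE 0)" and k: "k \<le> 0"
    and e: "ee a \<in> tensor \<iota>2 (A2 0) (WE k)" and c: "cc a \<in> tensor \<iota>1 (A1 1) (WE k)"
  shows "\<exists>a'. a' \<in> tensor \<iota>1 (A1 0) (WE 0) \<and> ee a' \<in> tensor \<iota>2 (A2 0) (WE k) \<and>
     cc a' \<in> tensor \<iota>1 (A1 1) (WE (k - 1))"
proof -
  obtain U L where U: "finite U" "U \<subseteq> WE k" and V0: "\<forall>u\<in>U. \<forall>E\<in>WE (k - 1). L u E = 0"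
    and lin0: "\<forall>u. linL (L u)" and dec0: "\<forall>E\<in>WE k. E - (\<Sum>u\<in>U. msc (L u E) u) \<in> WE (k - 1)"
    using LA'[of "k - 1" k] by auto
  have V: "\<And>u E. u \<in> U \<Longrightarrow> E \<in> WE (k - 1) \<Longrightarrow> L u E = 0" using V0 by blast
  have lin: "\<And>u. linL (L u)" using lin0 by blast
  have dec: "\<And>E. E \<in> WE k \<Longrightarrow> E - (\<Sum>u\<in>U. msc (L u E) u) \<in> WE (k - 1)" using dec0 by blast
  have ae: "\<And>p q. a p q \<in> A1 0" by (rule D1.tensor_entry[OF a D1.ksub_A])
  have Dc: "mat_map d1 (cc a) = - mat_mult \<omega>1 (cc a) - mat_mult (cc a) \<omega>2"
    by (rule D1.dc[OF ae obj(2)[OF o1] obj(2)[OF o2] obj(3)[OF o1] obj(3)[OF o2]])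
  have Dct: "mat_map d1 (cc a) \<in> tensor \<iota>1 UNIV (WE (k - 1))"
  proof -
    have t1: "mat_mult \<omega>1 (cc a) \<in> tensor \<iota>1 UNIV (WE (k - 1))" by (rule U1[OF tm1[OF w1 c]]) simp_all
    have t2: "mat_mult (cc a) \<omega>2 \<in> tensor \<iota>1 UNIV (WE (k - 1))" by (rule U1[OF tm1[OF c w2]]) simp_all
    show ?thesis unfolding Dc by (rule D1.tensor_diff[OF _ D1.tensor_neg[OF t1] t2]) simp_all
  qed
  have "\<exists>g. g \<in> A1 0 \<and> Lam \<iota>1 (L u) (cc a) = d1 g" if u: "u \<in> U" for u
  proof -
    let ?c = "Lam \<iota>1 (L u) (cc a)"
    have cA: "?c \<in> A1 1" by (rule D1.Lam_in[OF c D1.ksub_A lin])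
    have "d1 ?c = Lam \<iota>1 (L u) (mat_map d1 (cc a))" by (rule D1.D.f_Lam)
    also have "\<dots> = 0" by (rule D1.Lam_vanish[OF Dct lin V[OF u]])
    finally have dc0: "d1 ?c = 0" .
    have z1: "Lam \<iota>2 (L u) (mat_mult p1 (ee a)) = 0"
      by (rule D2.Lam_vanish[OF tm2[OF pw1 e] lin V[OF u]]) simp_all
    have z2: "Lam \<iota>2 (L u) (mat_mult (ee a) p2) = 0"
      by (rule D2.Lam_vanish[OF tm2[OF e pw2] lin V[OF u]]) simp_all
    have "\<phi> ?c = Lam \<iota>2 (L u) (mat_map \<phi> (cc a))" by (rule P.f_Lam)
    also have "\<dots> = - (Lam \<iota>2 (L u) (mat_map d2 (ee a)) + Lam \<iota>2 (L u) (mat_mult p1 (ee a))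
        - Lam \<iota>2 (L u) (mat_mult (ee a) p2))"
      by (simp only: key Lam_neg Lam_add Lam_diff)
    also have "\<dots> = - d2 (Lam \<iota>2 (L u) (ee a))"
      by (simp only: z1 z2 D2.D.f_Lam add_0_right diff_0_right)
    also have "\<dots> = d2 (- Lam \<iota>2 (L u) (ee a))" by (rule D2.D.f_minus[symmetric])
    finally have pc: "\<phi> ?c = d2 (- Lam \<iota>2 (L u) (ee a))" .
    have "- Lam \<iota>2 (L u) (ee a) \<in> A2 0" by (rule negA2[OF D2.Lam_in[OF e D2.ksub_A lin]])
    then have "\<phi> ?c \<in> coboundaries A2 d2 1" using pc by simp
    moreover have "?c \<in> cocycles A1 d1 1" using cA dc0 by (simp add: cocycles_def)
    ultimately have "?c \<in> coboundaries A1 d1 1" using iso1 unfolding induces_cohom_iso_def by blast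
    then show ?thesis by auto
  qed
  then obtain g where g: "\<And>u. u \<in> U \<Longrightarrow> g u \<in> A1 0" "\<And>u. u \<in> U \<Longrightarrow> Lam \<iota>1 (L u) (cc a) = d1 (g u)"
    by metis
  define H where "H = (\<Sum>u\<in>U. smat \<iota>1 (g u) u)"
  have Hk: "H \<in> tensor \<iota>1 (A1 0) (WE k)" unfolding H_def
    by (rule D1.tensor_sum, rule D1.tensor_smat[OF g(1)]) (use U in blast)+
  have H0: "H \<in> tensor \<iota>1 (A1 0) (WE 0)" by (rule W1[OF Hk k])
  have DH: "mat_map d1 H = (\<Sum>u\<in>U. smat \<iota>1 (Lam \<iota>1 (L u) (cc a)) u)"
    unfolding H_def D1.D.map_sum by (rule sum.cong) (simp_all add: D1.D.map_smat g(2))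
  show ?thesis
  proof (intro exI conjI)
    show "a - H \<in> tensor \<iota>1 (A1 0) (WE 0)" by (rule D1.tensor_diff[OF negA1 a H0])
    have "ee (a - H) = ee a + mat_map \<phi> H" by (simp add: P.map_diff algebra_simps)
    also have "\<dots> \<in> tensor \<iota>2 (A2 0) (WE k)"
      by (rule D2.tensor_add[OF e P.tensor_map[OF Hk phi_A]])
    finally show "ee (a - H) \<in> tensor \<iota>2 (A2 0) (WE k)" .
    have "cc (a - H) = (cc a - mat_map d1 H) - (mat_mult \<omega>1 H - mat_mult H \<omega>2)"
      by (simp add: D1.D.map_diff mm_diff_left mm_diff_right algebra_simps)
    also have "\<dots> \<in> tensor \<iota>1 (A1 1) (WE (k - 1))"
    proof (rule D1.tensor_diff[OF negA1])
      show "cc a - mat_map d1 H \<in> tensor \<iota>1 (A1 1) (WE (k - 1))"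
        unfolding DH by (rule D1.decomp[OF lin dec c])
      show "mat_mult \<omega>1 H - mat_mult H \<omega>2 \<in> tensor \<iota>1 (A1 1) (WE (k - 1))"
      proof (rule D1.tensor_diff[OF negA1])
        show "mat_mult \<omega>1 H \<in> tensor \<iota>1 (A1 1) (WE (k - 1))" by (rule tm1[OF w1 Hk]) simp_all
        show "mat_mult H \<omega>2 \<in> tensor \<iota>1 (A1 1) (WE (k - 1))" by (rule tm1[OF Hk w2]) simp_all
      qed
    qed
    finally show "cc (a - H) \<in> tensor \<iota>1 (A1 1) (WE (k - 1))" .
  qed
qed

lemma surj_all:
  "\<exists>a. a \<in> tensor \<iota>1 (A1 0) (WE 0) \<and> ee a \<in> tensor \<iota>2 (A2 0) (WE (- int m)) \<and>
     cc a \<in> tensor \<iota>1 (A1 1) (WE (- int m - 1))"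
proof (rule nat.induct[where P="\<lambda>m. \<exists>a. a \<in> tensor \<iota>1 (A1 0) (WE 0) \<and> ee a \<in> tensor \<iota>2 (A2 0) (WE (- int m)) \<and>
     cc a \<in> tensor \<iota>1 (A1 1) (WE (- int m - 1))"])
  have z1: "ee 0 = b" by (simp only: P.map_zero diff_zero)
  have z2: "cc 0 = 0" by (simp only: D1.D.map_zero mm_zero_left mm_zero_right add_0 diff_zero)
  have "0 \<in> tensor \<iota>1 (A1 0) (WE 0)" by (rule D1.tensor_zero)
  moreover have "ee 0 \<in> tensor \<iota>2 (A2 0) (WE (- int 0))" unfolding z1 using bt by simp
  moreover have "cc 0 \<in> tensor \<iota>1 (A1 1) (WE (- int 0 - 1))" unfolding z2 by (rule D1.tensor_zero)
  ultimately show "\<exists>a. a \<in> tensor \<iota>1 (A1 0) (WE 0) \<and> ee a \<in> tensor \<iota>2 (A2 0) (WE (- int 0)) \<and>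
     cc a \<in> tensor \<iota>1 (A1 1) (WE (- int 0 - 1))" by blast
next
  fix m assume IH: "\<exists>a. a \<in> tensor \<iota>1 (A1 0) (WE 0) \<and> ee a \<in> tensor \<iota>2 (A2 0) (WE (- int m)) \<and>
     cc a \<in> tensor \<iota>1 (A1 1) (WE (- int m - 1))"
  then obtain a where a: "a \<in> tensor \<iota>1 (A1 0) (WE 0)" and e: "ee a \<in> tensor \<iota>2 (A2 0) (WE (- int m))"
    and c: "cc a \<in> tensor \<iota>1 (A1 1) (WE (- int m - 1))" by blast
  obtain a1 where a1: "a1 \<in> tensor \<iota>1 (A1 0) (WE 0)" and e1: "ee a1 \<in> tensor \<iota>2 (A2 0) (WE (- int m - 1))"
    and c1: "cc a1 \<in> tensor \<iota>1 (A1 1) (WE (- int m - 1))"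
    using half1[OF a _ e c] by auto
  obtain a2 where a2: "a2 \<in> tensor \<iota>1 (A1 0) (WE 0)" and e2: "ee a2 \<in> tensor \<iota>2 (A2 0) (WE (- int m - 1))"
    and c2: "cc a2 \<in> tensor \<iota>1 (A1 1) (WE (- int m - 1 - 1))"
    using half2[OF a1 _ e1 c1] by auto
  have i1: "- int (Suc m) = - int m - 1" by simp
  have i2: "- int (Suc m) - 1 = - int m - 1 - 1" by simp
  show "\<exists>a. a \<in> tensor \<iota>1 (A1 0) (WE 0) \<and> ee a \<in> tensor \<iota>2 (A2 0) (WE (- int (Suc m))) \<and>
     cc a \<in> tensor \<iota>1 (A1 1) (WE (- int (Suc m) - 1))" unfolding i1 i2 using a2 e2 c2 by blast
qed

lemma hom_surj: "\<exists>a \<in> Fnil_hom \<iota>1 A1 d1 W \<omega>1 \<omega>2. mat_map \<phi> a = b"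
proof -
  obtain N :: nat where N1: "\<And>k M S. k \<le> - int N \<Longrightarrow> M \<in> tensor \<iota>1 S (WE k) \<Longrightarrow> M = 0"
    and N2: "\<And>k M S. k \<le> - int N \<Longrightarrow> M \<in> tensor \<iota>2 S (WE k) \<Longrightarrow> M = 0"
    by (rule tensor_zero_top) blast
  obtain a where a: "a \<in> tensor \<iota>1 (A1 0) (WE 0)" and e: "ee a \<in> tensor \<iota>2 (A2 0) (WE (- int N))"
    and c: "cc a \<in> tensor \<iota>1 (A1 1) (WE (- int N - 1))" using surj_all by blast
  have "ee a = 0" by (rule N2[OF order_refl e])
  then have pa: "mat_map \<phi> a = b" by simp
  have "cc a = 0" by (rule N1[OF _ c]) simp
  then have "a \<in> Fnil_hom \<iota>1 A1 d1 W \<omega>1 \<omega>2" unfolding hom_iff using a by blast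
  then show ?thesis using pa by blast
qed

end

end

context setting
begin

lemma I1t: "(Imat :: 'n \<Rightarrow> 'n \<Rightarrow> 'a) \<in> tensor \<iota>1 (A1 0) (WE 0)"
proof -
  have "(Imat :: 'n \<Rightarrow> 'n \<Rightarrow> 'a) = smat \<iota>1 1 kid" by (simp add: fun_eq_iff Imat_def kid_def D1.i_one D2.i_one)
  also have "\<dots> \<in> tensor \<iota>1 (A1 0) (WE 0)" by (rule D1.tensor_smat[OF D1.one_A WE_id])
  finally show ?thesis .
qed

lemma I2t: "(Imat :: 'n \<Rightarrow> 'n \<Rightarrow> 'b) \<in> tensor \<iota>2 (A2 0) (WE 0)"
proof -
  have "(Imat :: 'n \<Rightarrow> 'n \<Rightarrow> 'b) = smat \<iota>2 1 kid" by (simp add: fun_eq_iff Imat_def kid_def D1.i_one D2.i_one)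
  also have "\<dots> \<in> tensor \<iota>2 (A2 0) (WE 0)" by (rule D2.tensor_smat[OF D2.one_A WE_id])
  finally show ?thesis .
qed

lemma DI1: "mat_map d1 (Imat :: 'n \<Rightarrow> 'n \<Rightarrow> 'a) = 0"
  by (simp add: fun_eq_iff mat_map_def Imat_def D1.d_one)

lemma PI: "mat_map \<phi> (Imat :: 'n \<Rightarrow> 'n \<Rightarrow> 'a) = Imat"
  by (simp add: fun_eq_iff mat_map_def Imat_def phi_one)

lemma gr_sub1: "a \<in> Fnil_gr_hom \<iota>1 A1 d1 W \<omega>1 \<omega>2 \<Longrightarrow> a \<in> Fnil_hom \<iota>1 A1 d1 W \<omega>1 \<omega>2"
proof -
  assume "a \<in> Fnil_gr_hom \<iota>1 A1 d1 W \<omega>1 \<omega>2"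
  then have g: "a - Imat \<in> tensor \<iota>1 (A1 0) (WE (-1))" and e: "mat_map d1 a + mat_mult \<omega>1 a - mat_mult a \<omega>2 = 0"
    unfolding gr_iff by blast+
  have "(a - Imat) + Imat \<in> tensor \<iota>1 (A1 0) (WE 0)"
    by (rule D1.tensor_add[OF W1[OF g] I1t]) simp
  then show ?thesis unfolding hom_iff using e by simp
qed

lemma gr_sub2: "a \<in> Fnil_gr_hom \<iota>2 A2 d2 W \<omega>1 \<omega>2 \<Longrightarrow> a \<in> Fnil_hom \<iota>2 A2 d2 W \<omega>1 \<omega>2"
proof -
  assume "a \<in> Fnil_gr_hom \<iota>2 A2 d2 W \<omega>1 \<omega>2"
  then have g: "a - Imat \<in> tensor \<iota>2 (A2 0) (WE (-1))" and e: "mat_map d2 a + mat_mult \<omega>1 a - mat_mult a \<omega>2 = 0"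
    unfolding gr_iff by blast+
  have "(a - Imat) + Imat \<in> tensor \<iota>2 (A2 0) (WE 0)"
    by (rule D2.tensor_add[OF W2[OF g] I2t]) simp
  then show ?thesis unfolding hom_iff using e by simp
qed

lemma map_gr:
  assumes "a \<in> Fnil_gr_hom \<iota>1 A1 d1 W \<omega>1 \<omega>2"
  shows "mat_map \<phi> a \<in> Fnil_gr_hom \<iota>2 A2 d2 W (mat_map \<phi> \<omega>1) (mat_map \<phi> \<omega>2)"
proof -
  have h: "mat_map \<phi> a \<in> Fnil_hom \<iota>2 A2 d2 W (mat_map \<phi> \<omega>1) (mat_map \<phi> \<omega>2)"
    by (rule map_hom[OF gr_sub1[OF assms]])
  have g: "a - Imat \<in> tensor \<iota>1 (A1 0) (WE (-1))" using assms unfolding gr_iff by blast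
  have "mat_map \<phi> a - Imat = mat_map \<phi> (a - Imat)" by (simp only: P.map_diff PI)
  also have "\<dots> \<in> tensor \<iota>2 (A2 0) (WE (-1))" by (rule P.tensor_map[OF g phi_A])
  finally show ?thesis using h unfolding hom_iff gr_iff by blast
qed

lemma gr_surj:
  assumes o1: "Fnil_obj \<iota>1 A1 d1 W \<omega>1" and o2: "Fnil_obj \<iota>1 A1 d1 W \<omega>2"
    and bg: "b \<in> Fnil_gr_hom \<iota>2 A2 d2 W (mat_map \<phi> \<omega>1) (mat_map \<phi> \<omega>2)"
  shows "\<exists>a \<in> Fnil_gr_hom \<iota>1 A1 d1 W \<omega>1 \<omega>2. mat_map \<phi> a = b"
proof -
  obtain a where a: "a \<in> Fnil_hom \<iota>1 A1 d1 W \<omega>1 \<omega>2" and pa: "mat_map \<phi> a = b"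
    using hom_surj[OF o1 o2 gr_sub2[OF bg]] by blast
  have at: "a \<in> tensor \<iota>1 (A1 0) (WE 0)" and ae: "mat_map d1 a + mat_mult \<omega>1 a - mat_mult a \<omega>2 = 0"
    using a unfolding hom_iff by blast+
  have bg': "b - Imat \<in> tensor \<iota>2 (A2 0) (WE (-1))" using bg unfolding gr_iff by blast
  have M0: "a - Imat \<in> tensor \<iota>1 (A1 0) (WE 0)" by (rule D1.tensor_diff[OF negA1 at I1t])
  have w1: "\<omega>1 \<in> tensor \<iota>1 (A1 1) (WE (-1))" and w2: "\<omega>2 \<in> tensor \<iota>1 (A1 1) (WE (-1))"
    using obj(1)[OF o1] obj(1)[OF o2] .
  have da: "mat_map d1 a = mat_mult a \<omega>2 - mat_mult \<omega>1 a" by (rule ab_iso[OF ae])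
  have "mat_map d1 (a - Imat) = mat_mult a \<omega>2 - mat_mult \<omega>1 a"
    by (simp only: D1.D.map_diff DI1 da diff_zero)
  also have "\<dots> \<in> tensor \<iota>1 (A1 1) (WE (-1))"
    by (rule D1.tensor_diff[OF negA1 tm1[OF at w2] tm1[OF w1 at]]) simp_all
  finally have DM: "mat_map d1 (a - Imat) \<in> tensor \<iota>1 UNIV (WE (0 - 1))" by (simp add: U1)
  have "mat_map \<phi> (a - Imat) = b - Imat" by (simp only: P.map_diff PI pa)
  then have PM: "mat_map \<phi> (a - Imat) \<in> tensor \<iota>2 UNIV (WE (0 - 1))" using U2[OF bg'] by simp
  have "a - Imat \<in> tensor \<iota>1 (A1 0) (WE (0 - 1))" by (rule step_inj[OF M0 _ DM PM]) simp
  then have "a \<in> Fnil_gr_hom \<iota>1 A1 d1 W \<omega>1 \<omega>2" unfolding gr_iff using ae by simp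
  then show ?thesis using pa by blast
qed

end

theorem proposition10p2:
  fixes \<iota>1 :: "'k::real_normed_field \<Rightarrow> 'a::ring_1" and A1 :: "nat \<Rightarrow> 'a set" and d1 :: "'a \<Rightarrow> 'a"
    and \<iota>2 :: "'k \<Rightarrow> 'b::ring_1" and A2 :: "nat \<Rightarrow> 'b set" and d2 :: "'b \<Rightarrow> 'b"
    and \<phi> :: "'a \<Rightarrow> 'b"
    and W :: "int \<Rightarrow> ('n::finite \<Rightarrow> 'k) set"
  assumes "dga \<iota>1 A1 d1" and "dga \<iota>2 A2 d2"
    and "cohom_connected \<iota>1 A1 d1" and "cohom_connected \<iota>2 A2 d2"
    and "dga_hom \<iota>1 A1 d1 \<iota>2 A2 d2 \<phi>"
    and "induces_cohom_iso A1 d1 A2 d2 \<phi> 0" and "induces_cohom_iso A1 d1 A2 d2 \<phi> 1"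
    and "incr_filtration W"
  shows "(\<forall>\<omega>1 \<omega>2. Fnil_obj \<iota>1 A1 d1 W \<omega>1 \<and> Fnil_obj \<iota>1 A1 d1 W \<omega>2 \<longrightarrow>
            bij_betw (mat_map \<phi>) (Fnil_hom \<iota>1 A1 d1 W \<omega>1 \<omega>2)
              (Fnil_hom \<iota>2 A2 d2 W (mat_map \<phi> \<omega>1) (mat_map \<phi> \<omega>2)))
       \<and> (\<forall>\<omega>1 \<omega>2. Fnil_obj \<iota>1 A1 d1 W \<omega>1 \<and> Fnil_obj \<iota>1 A1 d1 W \<omega>2 \<longrightarrow>
            bij_betw (mat_map \<phi>) (Fnil_gr_hom \<iota>1 A1 d1 W \<omega>1 \<omega>2)
              (Fnil_gr_hom \<iota>2 A2 d2 W (mat_map \<phi> \<omega>1) (mat_map \<phi> \<omega>2)))"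
proof -
  have half: "(1/2 + 1/2 :: 'k) = 1" by (simp add: add_divide_distrib[symmetric])
  interpret S: setting \<iota>1 A1 d1 \<iota>2 A2 d2 \<phi> W
    by (rule setting.intro[OF dgl.intro[OF assms(1)] dgl.intro[OF assms(2)]],
        rule setting_axioms.intro) (use assms half in simp_all)
  show ?thesis
  proof (intro conjI allI impI)
    fix \<omega>1 \<omega>2 assume o: "Fnil_obj \<iota>1 A1 d1 W \<omega>1 \<and> Fnil_obj \<iota>1 A1 d1 W \<omega>2"
    show "bij_betw (mat_map \<phi>) (Fnil_hom \<iota>1 A1 d1 W \<omega>1 \<omega>2)
              (Fnil_hom \<iota>2 A2 d2 W (mat_map \<phi> \<omega>1) (mat_map \<phi> \<omega>2))"
      unfolding bij_betw_def
    proof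
      show "inj_on (mat_map \<phi>) (Fnil_hom \<iota>1 A1 d1 W \<omega>1 \<omega>2)"
        by (rule inj_onI) (use S.hom_inj o in blast)
      show "mat_map \<phi> ` Fnil_hom \<iota>1 A1 d1 W \<omega>1 \<omega>2 = Fnil_hom \<iota>2 A2 d2 W (mat_map \<phi> \<omega>1) (mat_map \<phi> \<omega>2)"
        using S.map_hom S.hom_surj o by blast
    qed
  next
    fix \<omega>1 \<omega>2 assume o: "Fnil_obj \<iota>1 A1 d1 W \<omega>1 \<and> Fnil_obj \<iota>1 A1 d1 W \<omega>2"
    show "bij_betw (mat_map \<phi>) (Fnil_gr_hom \<iota>1 A1 d1 W \<omega>1 \<omega>2)
              (Fnil_gr_hom \<iota>2 A2 d2 W (mat_map \<phi> \<omega>1) (mat_map \<phi> \<omega>2))"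
      unfolding bij_betw_def
    proof
      show "inj_on (mat_map \<phi>) (Fnil_gr_hom \<iota>1 A1 d1 W \<omega>1 \<omega>2)"
        by (rule inj_onI) (use S.hom_inj S.gr_sub1 o in blast)
      show "mat_map \<phi> ` Fnil_gr_hom \<iota>1 A1 d1 W \<omega>1 \<omega>2 = Fnil_gr_hom \<iota>2 A2 d2 W (mat_map \<phi> \<omega>1) (mat_map \<phi> \<omega>2)"
        using S.map_gr S.gr_surj o by blast
    qed
  qed
qed

end
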